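(* Let $(S,P)$ be a $\Gamma$-contraction on a Hilbert space $\mathcal{H}$, let $F\in\mathcal{B}(\mathcal{D}_P)$ be the fundamental operator of $(S,P)$ and let $G\in\mathcal{B}(\mathcal{D}_{P^*})$ be the fundamental operator of $(S^*,P^* )$. Then $$\Theta_P(z)(F+F^*z)=(G^*+Gz)\Theta_P(z)\quad\text{for all } z\in\mathbb{D},$$ where $\Theta_P$ is the characteristic function of $P$.
   Context: The symmetrized bidisc is $\Gamma=\{(z_1+z_2,z_1z_2):|z_1|,|z_2|\le 1\}$. A $\Gamma$-contraction is a commuting pair $(S,P)$ of bounded operators on a Hilbert space having $\Gamma$ as a spectral set; then $P$ is a contraction and $(S^*,P^* )$ is also a $\Gamma$-contraction. For a contraction $P$, $D_P=(I-P^*P)^{1/2}$, $\mathcal{D}_P=\overline{\operatorname{Ran}}\,D_P$, and similarly $D_{P^*}$, $\mathcal{D}_{P^*}$. The fundamental operator of a $\Gamma$-contraction $(S,P)$ is the unique $F\in\mathcal{B}(\mathcal{D}_P)$ satisfying $S-S^*P=D_PFD_P$. The characteristic function of $P$ is $\Theta_P(z)=[-P+zD_{P^*}(I-zP^* )^{-1}D_P]|_{\mathcal{D}_P}\in\mathcal{B}(\mathcal{D}_P,\mathcal{D}_{P^*})$, $z\in\mathbb{D}$. *)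

theory Defs
  imports "HOL-Analysis.Analysis"
begin

class chilbert = banach +
  fixes scaleC :: "complex \<Rightarrow> 'a \<Rightarrow> 'a" (infixr \<open>*\<^sub>C\<close> 75)
  fixes cinner :: "'a \<Rightarrow> 'a \<Rightarrow> complex"
  assumes scaleC_add_right: "a *\<^sub>C (x + y) = a *\<^sub>C x + a *\<^sub>C y"
    and scaleC_add_left: "(a + b) *\<^sub>C x = a *\<^sub>C x + b *\<^sub>C x"
    and scaleC_scaleC: "a *\<^sub>C (b *\<^sub>C x) = (a * b) *\<^sub>C x"
    and scaleC_one: "1 *\<^sub>C x = x"
    and scaleC_of_real: "(complex_of_real r) *\<^sub>C x = r *\<^sub>R x"
    and cinner_conj: "cinner x y = cnj (cinner y x)"
    and cinner_add_left: "cinner (x + y) z = cinner x z + cinner y z"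
    and cinner_scaleC_left: "cinner (a *\<^sub>C x) y = a * cinner x y"
    and norm_cinner: "norm x = sqrt (Re (cinner x x))"

text \<open>Complex-linear, bounded maps on a subset (intended: a closed subspace) M.\<close>
definition clinear_on :: "'a::chilbert set \<Rightarrow> ('a \<Rightarrow> 'a) \<Rightarrow> bool" where
  "clinear_on M T \<longleftrightarrow> (\<forall>x\<in>M. \<forall>y\<in>M. T (x + y) = T x + T y)
      \<and> (\<forall>c. \<forall>x\<in>M. T (c *\<^sub>C x) = c *\<^sub>C T x)"

definition bounded_op_on :: "'a::chilbert set \<Rightarrow> ('a \<Rightarrow> 'a) \<Rightarrow> bool" where
  "bounded_op_on M T \<longleftrightarrow> clinear_on M T \<and> (\<exists>K. \<forall>x\<in>M. norm (T x) \<le> K * norm x)"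

abbreviation bop :: "('a::chilbert \<Rightarrow> 'a) \<Rightarrow> bool" where
  "bop T \<equiv> bounded_op_on UNIV T"

definition adjoint_on :: "'a::chilbert set \<Rightarrow> ('a \<Rightarrow> 'a) \<Rightarrow> 'a \<Rightarrow> 'a" where
  "adjoint_on M T y = (THE w. w \<in> M \<and> (\<forall>x\<in>M. cinner (T x) y = cinner x w))"

definition adj :: "('a::chilbert \<Rightarrow> 'a) \<Rightarrow> 'a \<Rightarrow> 'a" where
  "adj T = adjoint_on UNIV T"

definition positive_op :: "('a::chilbert \<Rightarrow> 'a) \<Rightarrow> bool" where
  "positive_op A \<longleftrightarrow> bop A \<and> (\<forall>x. Im (cinner (A x) x) = 0 \<and> 0 \<le> Re (cinner (A x) x))"

definition op_sqrt :: "('a::chilbert \<Rightarrow> 'a) \<Rightarrow> 'a \<Rightarrow> 'a" where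
  "op_sqrt A = (THE R. positive_op R \<and> R \<circ> R = A)"

definition inv_op :: "('a \<Rightarrow> 'b) \<Rightarrow> 'b \<Rightarrow> 'a" where
  "inv_op T y = (THE x. T x = y)"

definition defect :: "('a::chilbert \<Rightarrow> 'a) \<Rightarrow> 'a \<Rightarrow> 'a" where
  "defect P = op_sqrt (\<lambda>x. x - adj P (P x))"

definition defect_space :: "('a::chilbert \<Rightarrow> 'a) \<Rightarrow> 'a set" where
  "defect_space P = closure (range (defect P))"

definition gamma_set :: "(complex \<times> complex) set" where
  "gamma_set = {(z1 + z2, z1 * z2) | z1 z2. cmod z1 \<le> 1 \<and> cmod z2 \<le> 1}"

definition poly2 :: "(nat \<Rightarrow> nat \<Rightarrow> complex) \<Rightarrow> nat \<Rightarrow> complex \<Rightarrow> complex \<Rightarrow> complex" where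
  "poly2 c n s p = (\<Sum>i\<le>n. \<Sum>j\<le>n. c i j * s ^ i * p ^ j)"

definition poly2_op :: "(nat \<Rightarrow> nat \<Rightarrow> complex) \<Rightarrow> nat \<Rightarrow> ('a::chilbert \<Rightarrow> 'a) \<Rightarrow> ('a \<Rightarrow> 'a) \<Rightarrow> 'a \<Rightarrow> 'a" where
  "poly2_op c n S P x = (\<Sum>i\<le>n. \<Sum>j\<le>n. c i j *\<^sub>C (S ^^ i) ((P ^^ j) x))"

text \<open>Gamma is a spectral set for the commuting pair (S,P) of bounded operators
  (von Neumann inequality for all polynomials; Gamma is polynomially convex).\<close>
definition gamma_contraction :: "('a::chilbert \<Rightarrow> 'a) \<Rightarrow> ('a \<Rightarrow> 'a) \<Rightarrow> bool" where
  "gamma_contraction S P \<longleftrightarrow> bop S \<and> bop P \<and> S \<circ> P = P \<circ> S \<and>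
     (\<forall>c n. onorm (poly2_op c n S P) \<le> (SUP w\<in>gamma_set. cmod (poly2 c n (fst w) (snd w))))"

definition fundamental_operator :: "('a::chilbert \<Rightarrow> 'a) \<Rightarrow> ('a \<Rightarrow> 'a) \<Rightarrow> ('a \<Rightarrow> 'a) \<Rightarrow> bool" where
  "fundamental_operator S P F \<longleftrightarrow>
     bounded_op_on (defect_space P) F \<and> F ` defect_space P \<subseteq> defect_space P \<and>
     (\<forall>h. S h - adj S (P h) = defect P (F (defect P h)))"

definition char_fun :: "('a::chilbert \<Rightarrow> 'a) \<Rightarrow> complex \<Rightarrow> 'a \<Rightarrow> 'a" where
  "char_fun P z x = - P x + z *\<^sub>C defect (adj P) (inv_op (\<lambda>y. y - z *\<^sub>C adj P y) (defect P x))"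

end

theory Submission
  imports Defs "HOL-Computational_Algebra.Formal_Power_Series"
begin

context
  fixes dummy :: "'a::chilbert"
begin
end

lemma scaleC_zero_left [simp]: "(0::complex) *\<^sub>C (x::'a::chilbert) = 0"
  using scaleC_of_real[of 0 x] by simp

lemma scaleC_zero_right [simp]: "c *\<^sub>C (0::'a::chilbert) = 0"
proof -
  have "c *\<^sub>C (0::'a) = c *\<^sub>C 0 + c *\<^sub>C 0" using scaleC_add_right[of c 0 0] by simp
  thus ?thesis by simp
qed

lemma scaleC_minus_right: "c *\<^sub>C (- x::'a::chilbert) = - (c *\<^sub>C x)"
proof -
  have "c *\<^sub>C (x + - x) = c *\<^sub>C x + c *\<^sub>C (- x)" by (rule scaleC_add_right)
  thus ?thesis by (simp add: eq_neg_iff_add_eq_0 add.commute)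
qed

lemma scaleC_diff_right: "c *\<^sub>C (x - y::'a::chilbert) = c *\<^sub>C x - c *\<^sub>C y"
  using scaleC_add_right[of c x "-y"] scaleC_minus_right[of c y] by simp

lemma scaleC_minus_left: "(- c) *\<^sub>C (x::'a::chilbert) = - (c *\<^sub>C x)"
proof -
  have "(c + - c) *\<^sub>C x = c *\<^sub>C x + (- c) *\<^sub>C x" by (rule scaleC_add_left)
  thus ?thesis by (simp add: eq_neg_iff_add_eq_0 add.commute)
qed

lemma scaleC_diff_left: "(a - b) *\<^sub>C (x::'a::chilbert) = a *\<^sub>C x - b *\<^sub>C x"
  using scaleC_add_left[of a "-b" x] scaleC_minus_left[of b x] by simp

lemma scaleC_one_simp [simp]: "(1::complex) *\<^sub>C (x::'a::chilbert) = x"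
  by (rule scaleC_one)

lemma scaleC_minus1: "(-1::complex) *\<^sub>C (x::'a::chilbert) = - x"
  using scaleC_minus_left[of 1 x] by simp

lemma scaleC_scaleR_comm: "c *\<^sub>C (r *\<^sub>R (x::'a::chilbert)) = r *\<^sub>R (c *\<^sub>C x)"
  by (simp add: scaleC_of_real[symmetric] scaleC_scaleC mult.commute)

lemma scaleR_as_scaleC: "r *\<^sub>R (x::'a::chilbert) = complex_of_real r *\<^sub>C x"
  by (simp add: scaleC_of_real)

lemma scaleC_sum_right: "c *\<^sub>C (sum f A) = (\<Sum>i\<in>A. c *\<^sub>C (f i::'a::chilbert))"
  by (induction A rule: infinite_finite_induct) (auto simp: scaleC_add_right)

lemma scaleC_sum_left: "(sum f A) *\<^sub>C (x::'a::chilbert) = (\<Sum>i\<in>A. f i *\<^sub>C x)"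
  by (induction A rule: infinite_finite_induct) (auto simp: scaleC_add_left)

lemma cinner_add_right: "cinner x (y + z) = cinner x y + cinner x (z::'a::chilbert)"
  by (metis cinner_add_left cinner_conj complex_cnj_add)

lemma cinner_scaleC_right: "cinner x (a *\<^sub>C y) = cnj a * cinner x (y::'a::chilbert)"
  by (metis cinner_conj cinner_scaleC_left complex_cnj_mult)

lemma cinner_zero_left [simp]: "cinner 0 (y::'a::chilbert) = 0"
  using cinner_add_left[of 0 0 y] by simp

lemma cinner_zero_right [simp]: "cinner (x::'a::chilbert) 0 = 0"
  using cinner_add_right[of x 0 0] by simp

lemma cinner_minus_left: "cinner (- x) (y::'a::chilbert) = - cinner x y"
  using cinner_scaleC_left[of "-1" x y] by (simp add: scaleC_minus1)

lemma cinner_minus_right: "cinner x (- y::'a::chilbert) = - cinner x y"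
  using cinner_scaleC_right[of x "-1" y] by (simp add: scaleC_minus1)

lemma cinner_diff_left: "cinner (x - z) (y::'a::chilbert) = cinner x y - cinner z y"
  using cinner_add_left[of x "-z" y] by (simp add: cinner_minus_left)

lemma cinner_diff_right: "cinner x (y - z::'a::chilbert) = cinner x y - cinner x z"
  using cinner_add_right[of x y "-z"] by (simp add: cinner_minus_right)

lemma cinner_scaleR_left: "cinner (r *\<^sub>R x) (y::'a::chilbert) = r *\<^sub>R cinner x y"
  by (simp add: scaleR_as_scaleC cinner_scaleC_left scaleR_conv_of_real)

lemma cinner_scaleR_right: "cinner x (r *\<^sub>R y::'a::chilbert) = r *\<^sub>R cinner x y"
  by (simp add: scaleR_as_scaleC cinner_scaleC_right scaleR_conv_of_real)

lemma cinner_sum_left: "cinner (sum f A) (y::'a::chilbert) = (\<Sum>i\<in>A. cinner (f i) y)"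
  by (induction A rule: infinite_finite_induct) (auto simp: cinner_add_left)

lemma cinner_sum_right: "cinner y (sum f A) = (\<Sum>i\<in>A. cinner (y::'a::chilbert) (f i))"
  by (induction A rule: infinite_finite_induct) (auto simp: cinner_add_right)

lemmas cinner_simps = cinner_add_left cinner_add_right cinner_diff_left cinner_diff_right
  cinner_minus_left cinner_minus_right cinner_scaleC_left cinner_scaleC_right

lemma Re_cinner_self_ge0: "0 \<le> Re (cinner x (x::'a::chilbert))"
  using norm_ge_zero[of x] by (simp add: norm_cinner)

lemma Im_cinner_self [simp]: "Im (cinner x (x::'a::chilbert)) = 0"
proof -
  have "Im (cinner x x) = Im (cnj (cinner x x))" using cinner_conj[of x x] by (rule arg_cong)
  thus ?thesis by simp
qed

lemma Re_cinner_self: "Re (cinner x (x::'a::chilbert)) = (norm x)\<^sup>2"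
  using Re_cinner_self_ge0[of x] by (simp add: norm_cinner)

lemma cinner_self: "cinner x (x::'a::chilbert) = complex_of_real ((norm x)\<^sup>2)"
  by (rule complex_eqI) (simp_all add: Re_cinner_self)

lemma cinner_self_eq_0 [simp]: "cinner x x = 0 \<longleftrightarrow> (x::'a::chilbert) = 0"
  by (simp add: cinner_self)

lemma norm_scaleC: "norm (c *\<^sub>C (x::'a::chilbert)) = cmod c * norm x"
proof -
  have "(norm (c *\<^sub>C x))\<^sup>2 = Re (cinner (c *\<^sub>C x) (c *\<^sub>C x))" by (simp add: Re_cinner_self)
  also have "\<dots> = Re (c * cnj c * cinner x x)"
    by (simp add: cinner_scaleC_left cinner_scaleC_right mult.assoc mult.left_commute)
  also have "\<dots> = (cmod c * norm x)\<^sup>2"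
    by (simp add: cinner_self complex_mult_cnj power_mult_distrib cmod_power2)
  finally show ?thesis
    by (simp add: power2_eq_iff_nonneg)
qed

lemma cauchy_schwarz: "cmod (cinner x y) \<le> norm x * norm (y::'a::chilbert)"
proof (cases "y = 0")
  case True thus ?thesis by simp
next
  case False
  define a where "a = cinner x y / cinner y y"
  have yy: "cinner y y = complex_of_real ((norm y)\<^sup>2)" by (rule cinner_self)
  have ny: "norm y > 0" using False by simp
  have "0 \<le> Re (cinner (x - a *\<^sub>C y) (x - a *\<^sub>C y))" by (rule Re_cinner_self_ge0)
  also have "cinner (x - a *\<^sub>C y) (x - a *\<^sub>C y)
      = cinner x x - cnj a * cinner x y - a * cinner y x + a * cnj a * cinner y y"
    by (simp add: cinner_simps algebra_simps)
  also have "a * cnj a * cinner y y = cnj a * cinner x y"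
    using ny by (simp add: a_def yy field_simps power2_eq_square)
  also have "cinner y x = cnj (cinner x y)" by (rule cinner_conj)
  finally have "0 \<le> Re (cinner x x) - Re (a * cnj (cinner x y))" by simp
  also have "a * cnj (cinner x y) = complex_of_real ((cmod (cinner x y))\<^sup>2 / (norm y)\<^sup>2)"
    by (simp add: a_def yy complex_mult_cnj cmod_power2)
  finally have "(cmod (cinner x y))\<^sup>2 / (norm y)\<^sup>2 \<le> (norm x)\<^sup>2"
    by (simp add: Re_cinner_self)
  hence "(cmod (cinner x y))\<^sup>2 \<le> (norm x * norm y)\<^sup>2"
    using ny by (simp add: divide_le_eq power_mult_distrib)
  thus ?thesis
    by (meson mult_nonneg_nonneg norm_ge_zero power2_le_imp_le)
qed

lemma bounded_linear_cinner_left: "bounded_linear (\<lambda>x. cinner x (y::'a::chilbert))"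
proof (rule bounded_linear_intro[where K="norm y"])
  show "\<And>x z. cinner (x + z) y = cinner x y + cinner z y" by (rule cinner_add_left)
  show "\<And>r x. cinner (r *\<^sub>R x) y = r *\<^sub>R cinner x y" by (rule cinner_scaleR_left)
  show "\<And>x. norm (cinner x y) \<le> norm x * norm y" by (rule cauchy_schwarz)
qed

lemma bounded_linear_cinner_right: "bounded_linear (\<lambda>y. cinner (x::'a::chilbert) y)"
proof (rule bounded_linear_intro[where K="norm x"])
  show "\<And>y z. cinner x (y + z) = cinner x y + cinner x z" by (rule cinner_add_right)
  show "\<And>r y. cinner x (r *\<^sub>R y) = r *\<^sub>R cinner x y" by (rule cinner_scaleR_right)
  show "\<And>y. norm (cinner x y) \<le> norm y * norm x" using cauchy_schwarz[of x] by (simp add: mult.commute)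
qed

lemma bounded_linear_scaleC: "bounded_linear (\<lambda>x::'a::chilbert. c *\<^sub>C x)"
proof (rule bounded_linear_intro[where K="cmod c"])
  show "\<And>x y. c *\<^sub>C (x + y) = c *\<^sub>C x + c *\<^sub>C (y::'a)" by (rule scaleC_add_right)
  show "\<And>r x. c *\<^sub>C (r *\<^sub>R x) = r *\<^sub>R (c *\<^sub>C (x::'a))" by (rule scaleC_scaleR_comm)
  show "\<And>x. norm (c *\<^sub>C (x::'a)) \<le> norm x * cmod c" by (simp add: norm_scaleC mult.commute)
qed

lemma cinner_ext_right: "(\<And>y. cinner x y = cinner x' y) \<Longrightarrow> x = (x'::'a::chilbert)"
proof -
  assume h: "\<And>y. cinner x y = cinner x' y"
  have "cinner (x - x') (x - x') = 0" by (simp add: cinner_diff_left h)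
  thus ?thesis by simp
qed

lemma cinner_ext_left: "(\<And>y. cinner y x = cinner y x') \<Longrightarrow> x = (x'::'a::chilbert)"
proof -
  assume h: "\<And>y. cinner y x = cinner y x'"
  have "cinner (x - x') (x - x') = 0" by (simp add: cinner_diff_right h)
  thus ?thesis by simp
qed

lemma parallelogram:
  "(norm (a + b))\<^sup>2 + (norm (a - b))\<^sup>2 = 2 * (norm a)\<^sup>2 + 2 * (norm (b::'a::chilbert))\<^sup>2"
proof -
  have "complex_of_real ((norm (a + b))\<^sup>2 + (norm (a - b))\<^sup>2)
     = cinner (a+b) (a+b) + cinner (a-b) (a-b)" by (simp add: cinner_self)
  also have "\<dots> = 2 * cinner a a + 2 * cinner b b" by (simp add: cinner_simps)
  also have "\<dots> = complex_of_real (2 * (norm a)\<^sup>2 + 2 * (norm b)\<^sup>2)" by (simp add: cinner_self)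
  finally show ?thesis using of_real_eq_iff by blast
qed


definition csubspace :: "'a::chilbert set \<Rightarrow> bool" where
  "csubspace M \<longleftrightarrow> 0 \<in> M \<and> (\<forall>x\<in>M. \<forall>y\<in>M. x + y \<in> M) \<and> (\<forall>c. \<forall>x\<in>M. c *\<^sub>C x \<in> M)"

lemma csubspace_UNIV [simp]: "csubspace UNIV"
  by (simp add: csubspace_def)

lemma csubspace_0: "csubspace M \<Longrightarrow> 0 \<in> M"
  by (simp add: csubspace_def)
lemma csubspace_add: "csubspace M \<Longrightarrow> x \<in> M \<Longrightarrow> y \<in> M \<Longrightarrow> x + y \<in> M"
  by (simp add: csubspace_def)
lemma csubspace_scaleC: "csubspace M \<Longrightarrow> x \<in> M \<Longrightarrow> c *\<^sub>C x \<in> M"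
  by (simp add: csubspace_def)
lemma csubspace_minus: "csubspace M \<Longrightarrow> x \<in> M \<Longrightarrow> - x \<in> M"
  using csubspace_scaleC[of M x "-1"] by (simp add: scaleC_minus1)
lemma csubspace_diff: "csubspace M \<Longrightarrow> x \<in> M \<Longrightarrow> y \<in> M \<Longrightarrow> x - y \<in> M"
  using csubspace_add[of M x "-y"] csubspace_minus[of M y] by simp
lemma csubspace_scaleR: "csubspace M \<Longrightarrow> x \<in> M \<Longrightarrow> r *\<^sub>R x \<in> M"
  by (simp add: scaleR_as_scaleC csubspace_scaleC)

lemma quad_zero:
  fixes a b :: real
  assumes b: "0 \<le> b" and h: "\<And>t. 0 \<le> 2 * t * a + t\<^sup>2 * b"
  shows "a = 0"
proof (rule ccontr)
  assume a: "a \<noteq> 0"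
  define t where "t = - a / (b + 1)"
  have tb: "t * (b + 1) = - a" using b by (simp add: t_def)
  have "(2 * t * a + t\<^sup>2 * b) * (b + 1)\<^sup>2 = 2 * a * (b + 1) * (t * (b + 1)) + b * (t * (b + 1))\<^sup>2"
    by algebra
  also have "\<dots> = - a\<^sup>2 * (b + 2)" unfolding tb by algebra
  finally have eq: "(2 * t * a + t\<^sup>2 * b) * (b + 1)\<^sup>2 = - a\<^sup>2 * (b + 2)" .
  have "0 \<le> (2 * t * a + t\<^sup>2 * b) * (b + 1)\<^sup>2" using h[of t] by simp
  moreover have "a\<^sup>2 * (b + 2) > 0" using a b by simp
  ultimately show False using eq by linarith
qed

lemma norm_add_scaleR_sq:
  "(norm (u + t *\<^sub>R n))\<^sup>2 = (norm u)\<^sup>2 + 2 * t * Re (cinner n u) + t\<^sup>2 * (norm (n::'a::chilbert))\<^sup>2"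
proof -
  have "complex_of_real ((norm (u + t *\<^sub>R n))\<^sup>2) = cinner (u + t *\<^sub>R n) (u + t *\<^sub>R n)"
    by (simp add: cinner_self)
  also have "\<dots> = cinner u u + t *\<^sub>R cinner n u + t *\<^sub>R cinner u n + t *\<^sub>R t *\<^sub>R cinner n n"
    by (simp add: cinner_simps cinner_scaleR_left cinner_scaleR_right scaleR_add_right)
  finally have "(norm (u + t *\<^sub>R n))\<^sup>2 = Re (cinner u u + t *\<^sub>R cinner n u + t *\<^sub>R cinner u n + t *\<^sub>R t *\<^sub>R cinner n n)"
    by (metis Re_complex_of_real)
  also have "\<dots> = (norm u)\<^sup>2 + t * Re (cinner n u) + t * Re (cinner u n) + t * t * (norm n)\<^sup>2"
    by (simp add: Re_cinner_self)
  also have "Re (cinner u n) = Re (cinner n u)"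
    by (subst cinner_conj) simp
  finally show ?thesis by (simp add: power2_eq_square)
qed

lemma min_norm_exists:
  fixes C :: "'a::chilbert set"
  assumes cl: "closed C" and ne: "C \<noteq> {}"
    and mid: "\<And>a b. a \<in> C \<Longrightarrow> b \<in> C \<Longrightarrow> (1/2) *\<^sub>R (a + b) \<in> C"
  shows "\<exists>u\<in>C. \<forall>v\<in>C. norm u \<le> norm v"
proof -
  define d where "d = Inf (norm ` C)"
  have bdd: "bdd_below (norm ` C)" by (rule bdd_belowI[of _ 0]) auto
  have dle: "d \<le> norm v" if "v \<in> C" for v
    unfolding d_def using bdd that by (auto intro: cInf_lower)
  have d0: "0 \<le> d" unfolding d_def using ne by (auto intro!: cInf_greatest)
  have "\<forall>n::nat. \<exists>x\<in>C. norm x < d + 1 / (real n + 1)"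
  proof
    fix n :: nat
    have "Inf (norm ` C) < d + 1 / (real n + 1)" unfolding d_def by (simp add: add_pos_pos)
    then obtain r where "r \<in> norm ` C" "r < d + 1 / (real n + 1)"
      using ne by (metis cInf_lessD empty_is_image)
    thus "\<exists>x\<in>C. norm x < d + 1 / (real n + 1)" by auto
  qed
  then obtain X where XC: "\<And>n. X n \<in> C" and Xlt: "\<And>n. norm (X n) < d + 1 / (real n + 1)"
    by metis
  define e where "e n = 1 / (real n + 1)" for n :: nat
  have e0: "0 < e n" "e n \<le> 1" for n by (auto simp: e_def field_simps)
  have key: "(norm (X m - X n))\<^sup>2 \<le> (4 * d + 2) * (e m + e n)" for m n
  proof -
    have "2 * d \<le> 2 * norm ((1/2) *\<^sub>R (X m + X n))" using dle[OF mid[OF XC[of m] XC[of n]]] by simp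
    also have "\<dots> = norm (X m + X n)" by simp
    finally have s: "2 * d \<le> norm (X m + X n)" .
    have s2: "(2 * d)\<^sup>2 \<le> (norm (X m + X n))\<^sup>2" using s d0 by (intro power_mono) auto
    have am: "(norm (X m))\<^sup>2 \<le> (d + e m)\<^sup>2" using Xlt[of m] e_def by (intro power_mono) auto
    have an: "(norm (X n))\<^sup>2 \<le> (d + e n)\<^sup>2" using Xlt[of n] e_def by (intro power_mono) auto
    have par: "(norm (X m + X n))\<^sup>2 + (norm (X m - X n))\<^sup>2 = 2 * (norm (X m))\<^sup>2 + 2 * (norm (X n))\<^sup>2"
      by (rule parallelogram)
    have "(norm (X m - X n))\<^sup>2 \<le> 2 * (d + e m)\<^sup>2 + 2 * (d + e n)\<^sup>2 - (2 * d)\<^sup>2"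
      using par am an s2 by linarith
    also have "\<dots> = 4 * d * e m + 2 * e m * e m + 4 * d * e n + 2 * e n * e n"
      by (simp add: power2_eq_square algebra_simps)
    also have "\<dots> \<le> (4 * d + 2) * (e m + e n)"
    proof -
      have "e m * e m \<le> e m * 1" "e n * e n \<le> e n * 1"
        using e0[of m] e0[of n] by (intro mult_left_mono; simp)+
      thus ?thesis by (simp add: algebra_simps)
    qed
    finally show ?thesis .
  qed
  have "Cauchy X"
  proof (rule metric_CauchyI)
    fix r :: real assume r: "0 < r"
    obtain N :: nat where N: "(8 * d + 4) / r\<^sup>2 < real N" using reals_Archimedean2 by blast
    show "\<exists>M. \<forall>m\<ge>M. \<forall>n\<ge>M. dist (X m) (X n) < r"
    proof (intro exI allI impI)
      fix m n assume mn: "N \<le> m" "N \<le> n"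
      have em: "e m \<le> 1 / (real N + 1)" "e n \<le> 1 / (real N + 1)"
        using mn by (auto simp: e_def intro!: divide_left_mono)
      have "(norm (X m - X n))\<^sup>2 \<le> (4 * d + 2) * (e m + e n)" by (rule key)
      also have "\<dots> \<le> (4 * d + 2) * (2 / (real N + 1))"
        using em d0 by (intro mult_left_mono) auto
      also have "\<dots> < r\<^sup>2"
      proof -
        have r2: "0 < r\<^sup>2" using r by simp
        have "(8 * d + 4) < real N * r\<^sup>2" using N r2 by (simp add: field_simps)
        moreover have "r\<^sup>2 * (real N + 1) = real N * r\<^sup>2 + r\<^sup>2" by (simp add: algebra_simps)
        ultimately have "(8 * d + 4) < r\<^sup>2 * (real N + 1)" using r2 by linarith
        thus ?thesis by (simp add: field_simps)
      qed
      finally have "(norm (X m - X n))\<^sup>2 < r\<^sup>2" .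
      hence "norm (X m - X n) < r" using r by (simp add: power_less_imp_less_base)
      thus "dist (X m) (X n) < r" by (simp add: dist_norm)
    qed
  qed
  then obtain L where L: "X \<longlonglongrightarrow> L" using Cauchy_convergent_iff convergent_def by blast
  have LC: "L \<in> C" using closed_sequential_limits[of C] cl XC L by blast
  have "(\<lambda>n. norm (X n)) \<longlonglongrightarrow> norm L" using L by (rule tendsto_norm)
  moreover have "(\<lambda>n. norm (X n)) \<longlonglongrightarrow> d"
  proof (rule real_tendsto_sandwich[where f="\<lambda>n. d" and h="\<lambda>n. d + 1 / (real n + 1)"])
    show "\<forall>\<^sub>F n in sequentially. d \<le> norm (X n)" using dle XC by auto
    show "\<forall>\<^sub>F n in sequentially. norm (X n) \<le> d + 1 / (real n + 1)" using Xlt by (intro always_eventually allI less_imp_le)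
    show "(\<lambda>n. d) \<longlonglongrightarrow> d" by simp
    have "(\<lambda>n. 1 / (real n + 1)) \<longlonglongrightarrow> 0"
      using LIMSEQ_inverse_real_of_nat by (simp add: inverse_eq_divide add.commute)
    thus "(\<lambda>n. d + 1 / (real n + 1)) \<longlonglongrightarrow> d" using tendsto_add[of "\<lambda>n. d" d sequentially] by force
  qed
  ultimately have "norm L = d" by (rule LIMSEQ_unique)
  thus ?thesis using LC dle by auto
qed


lemma riesz:
  fixes M :: "'a::chilbert set" and \<phi> :: "'a \<Rightarrow> complex"
  assumes clM: "closed M" and sM: "csubspace M"
    and add: "\<And>x y. x \<in> M \<Longrightarrow> y \<in> M \<Longrightarrow> \<phi> (x + y) = \<phi> x + \<phi> y"
    and hom: "\<And>c x. x \<in> M \<Longrightarrow> \<phi> (c *\<^sub>C x) = c * \<phi> x"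
    and bnd: "\<And>x. x \<in> M \<Longrightarrow> cmod (\<phi> x) \<le> K * norm x"
  shows "\<exists>w\<in>M. \<forall>x\<in>M. \<phi> x = cinner x w"
proof (cases "\<forall>x\<in>M. \<phi> x = 0")
  case True
  thus ?thesis using csubspace_0[OF sM] by (intro bexI[of _ 0]) auto
next
  case False
  then obtain x0 where x0M: "x0 \<in> M" and x0: "\<phi> x0 \<noteq> 0" by auto
  have phi0: "\<phi> 0 = 0" using hom[OF x0M, of 0] by simp
  have diff: "\<phi> (x - y) = \<phi> x - \<phi> y" if "x \<in> M" "y \<in> M" for x y
  proof -
    have "\<phi> (x + (-1) *\<^sub>C y) = \<phi> x + (-1) * \<phi> y"
      using that by (simp add: add hom csubspace_scaleC[OF sM])
    thus ?thesis by (simp add: scaleC_minus1)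
  qed
  have scR: "\<phi> (t *\<^sub>R x) = complex_of_real t * \<phi> x" if "x \<in> M" for t x
    using hom[OF that] by (simp add: scaleR_as_scaleC)
  have lip: "(max K 0)-lipschitz_on M \<phi>"
  proof (rule lipschitz_onI)
    fix x y assume "x \<in> M" "y \<in> M"
    hence "cmod (\<phi> (x - y)) \<le> K * norm (x - y)" using bnd csubspace_diff[OF sM] by blast
    also have "\<dots> \<le> max K 0 * norm (x - y)" by (intro mult_right_mono) auto
    finally show "dist (\<phi> x) (\<phi> y) \<le> max K 0 * dist x y"
      using diff \<open>x \<in> M\<close> \<open>y \<in> M\<close> by (simp add: dist_norm)
  qed auto
  have cont: "continuous_on M \<phi>" using lip by (rule lipschitz_on_continuous_on)
  define C where "C = M \<inter> \<phi> -` {\<phi> x0}"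
  have clC: "closed C" unfolding C_def using cont clM by (rule continuous_closed_preimage) simp
  have neC: "C \<noteq> {}" using x0M by (auto simp: C_def)
  have midC: "(1/2) *\<^sub>R (a + b) \<in> C" if "a \<in> C" "b \<in> C" for a b
  proof -
    have ab: "a \<in> M" "b \<in> M" "\<phi> a = \<phi> x0" "\<phi> b = \<phi> x0" using that by (auto simp: C_def)
    hence "a + b \<in> M" using csubspace_add[OF sM] by blast
    hence "(1/2) *\<^sub>R (a + b) \<in> M" "\<phi> ((1/2) *\<^sub>R (a + b)) = \<phi> x0"
      using csubspace_scaleR[OF sM] scR ab add by auto
    thus ?thesis by (simp add: C_def)
  qed
  obtain u where uC: "u \<in> C" and umin: "\<And>v. v \<in> C \<Longrightarrow> norm u \<le> norm v"
    using min_norm_exists[OF clC neC midC] by blast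
  have uM: "u \<in> M" and phiu: "\<phi> u = \<phi> x0" using uC by (auto simp: C_def)
  have reorth: "Re (cinner n u) = 0" if nM: "n \<in> M" and n0: "\<phi> n = 0" for n
  proof (rule quad_zero)
    show "0 \<le> (norm n)\<^sup>2" by simp
    fix t :: real
    have "u + t *\<^sub>R n \<in> C"
      using nM uM phiu n0 by (simp add: C_def add scR csubspace_add csubspace_scaleR sM)
    hence "norm u \<le> norm (u + t *\<^sub>R n)" by (rule umin)
    hence "(norm u)\<^sup>2 \<le> (norm (u + t *\<^sub>R n))\<^sup>2" by (simp add: power_mono)
    thus "0 \<le> 2 * t * Re (cinner n u) + t\<^sup>2 * (norm n)\<^sup>2"
      by (simp add: norm_add_scaleR_sq)
  qed
  have orth: "cinner n u = 0" if nM: "n \<in> M" and n0: "\<phi> n = 0" for n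
  proof -
    have "Re (cinner n u) = 0" using reorth[OF nM n0] .
    moreover have "Re (cinner (\<i> *\<^sub>C n) u) = 0"
      using reorth[of "\<i> *\<^sub>C n"] nM n0 hom csubspace_scaleC[OF sM] by simp
    ultimately show ?thesis by (simp add: cinner_scaleC_left complex_eq_iff)
  qed
  have u0: "u \<noteq> 0" using phiu x0 phi0 by auto
  have uu: "cinner u u \<noteq> 0" using u0 by simp
  have uureal: "cnj (cinner u u) = cinner u u" by (rule cinner_conj[symmetric])
  define w where "w = (cnj (\<phi> u) / cinner u u) *\<^sub>C u"
  have wM: "w \<in> M" unfolding w_def by (rule csubspace_scaleC[OF sM uM])
  have "\<phi> x = cinner x w" if xM: "x \<in> M" for x
  proof -
    define n where "n = x - (\<phi> x / \<phi> u) *\<^sub>C u"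
    have nM: "n \<in> M" unfolding n_def using xM uM sM by (simp add: csubspace_diff csubspace_scaleC)
    have "\<phi> n = 0" unfolding n_def using xM uM phiu x0
      by (simp add: diff csubspace_scaleC[OF sM] hom)
    hence "cinner n u = 0" using orth nM by blast
    hence xu: "cinner x u = (\<phi> x / \<phi> u) * cinner u u"
      by (simp add: n_def cinner_diff_left cinner_scaleC_left)
    show ?thesis
      using uu x0 phiu by (simp add: w_def cinner_scaleC_right xu uureal)
  qed
  thus ?thesis using wM by blast
qed

lemma adjoint_on_unique:
  assumes sM: "csubspace M" and w1: "w1 \<in> M" and w2: "w2 \<in> M"
    and h1: "\<forall>x\<in>M. cinner (T x) y = cinner x w1" and h2: "\<forall>x\<in>M. cinner (T x) y = cinner x (w2::'a::chilbert)"
  shows "w1 = w2"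
proof -
  have "w1 - w2 \<in> M" using sM w1 w2 by (rule csubspace_diff)
  hence "cinner (w1 - w2) w1 = cinner (w1 - w2) w2" using h1 h2 by metis
  hence "cinner (w1 - w2) (w1 - w2) = 0" by (simp add: cinner_diff_right)
  thus ?thesis by simp
qed

lemma adjoint_on_eqI:
  assumes sM: "csubspace M" and wM: "w \<in> M" and h: "\<forall>x\<in>M. cinner (T x) y = cinner x (w::'a::chilbert)"
  shows "adjoint_on M T y = w"
  unfolding adjoint_on_def
  using adjoint_on_unique[OF sM _ wM _ h] wM h by (intro the_equality) auto

lemma adjoint_on_exists:
  assumes clM: "closed M" and sM: "csubspace M" and T: "bounded_op_on M (T::'a::chilbert \<Rightarrow> 'a)"
  shows "\<exists>w\<in>M. \<forall>x\<in>M. cinner (T x) y = cinner x w"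
proof -
  from T obtain K where lin: "clinear_on M T" and K: "\<forall>x\<in>M. norm (T x) \<le> K * norm x"
    by (auto simp: bounded_op_on_def)
  show ?thesis
  proof (rule riesz[OF clM sM, where K="K * norm y"])
    show "cinner (T (x + z)) y = cinner (T x) y + cinner (T z) y" if "x \<in> M" "z \<in> M" for x z
      using lin that by (simp add: clinear_on_def cinner_add_left)
    show "cinner (T (c *\<^sub>C x)) y = c * cinner (T x) y" if "x \<in> M" for c x
      using lin that by (simp add: clinear_on_def cinner_scaleC_left)
    show "cmod (cinner (T x) y) \<le> K * norm y * norm x" if "x \<in> M" for x
    proof -
      have "cmod (cinner (T x) y) \<le> norm (T x) * norm y" by (rule cauchy_schwarz)
      also have "\<dots> \<le> K * norm x * norm y" using K that by (intro mult_right_mono) auto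
      finally show ?thesis by (simp add: algebra_simps)
    qed
  qed
qed

lemma adjoint_on_props:
  assumes clM: "closed M" and sM: "csubspace M" and T: "bounded_op_on M (T::'a::chilbert \<Rightarrow> 'a)"
  shows "adjoint_on M T y \<in> M" "\<And>x. x \<in> M \<Longrightarrow> cinner (T x) y = cinner x (adjoint_on M T y)"
proof -
  obtain w where wM: "w \<in> M" and h: "\<forall>x\<in>M. cinner (T x) y = cinner x w"
    using adjoint_on_exists[OF clM sM T] by blast
  have eq: "adjoint_on M T y = w" by (rule adjoint_on_eqI[OF sM wM h])
  show "adjoint_on M T y \<in> M" using eq wM by simp
  show "\<And>x. x \<in> M \<Longrightarrow> cinner (T x) y = cinner x (adjoint_on M T y)" using eq h by simp
qed

lemma adjoint_on_add:
  assumes clM: "closed M" and sM: "csubspace M" and T: "bounded_op_on M (T::'a::chilbert \<Rightarrow> 'a)"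
  shows "adjoint_on M T (y1 + y2) = adjoint_on M T y1 + adjoint_on M T y2"
  using adjoint_on_props[OF clM sM T]
  by (intro adjoint_on_eqI[OF sM]) (auto simp: cinner_add_right csubspace_add[OF sM])

lemma adjoint_on_scaleC:
  assumes clM: "closed M" and sM: "csubspace M" and T: "bounded_op_on M (T::'a::chilbert \<Rightarrow> 'a)"
  shows "adjoint_on M T (c *\<^sub>C y) = c *\<^sub>C adjoint_on M T y"
  using adjoint_on_props[OF clM sM T]
  by (intro adjoint_on_eqI[OF sM]) (auto simp: cinner_scaleC_right csubspace_scaleC[OF sM])

lemma adjoint_on_minus:
  assumes clM: "closed M" and sM: "csubspace M" and T: "bounded_op_on M (T::'a::chilbert \<Rightarrow> 'a)"
  shows "adjoint_on M T (- y) = - adjoint_on M T y"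
  using adjoint_on_scaleC[OF assms, of "-1" y] by (simp add: scaleC_minus1)

lemma adjoint_on_diff:
  assumes clM: "closed M" and sM: "csubspace M" and T: "bounded_op_on M (T::'a::chilbert \<Rightarrow> 'a)"
  shows "adjoint_on M T (y1 - y2) = adjoint_on M T y1 - adjoint_on M T y2"
  using adjoint_on_add[OF assms, of y1 "-y2"] adjoint_on_minus[OF assms, of y2] by simp

lemma bop_add: "bop T \<Longrightarrow> T (x + y) = T x + T (y::'a::chilbert)"
  by (simp add: bounded_op_on_def clinear_on_def)
lemma bop_scaleC: "bop T \<Longrightarrow> T (c *\<^sub>C x) = c *\<^sub>C T (x::'a::chilbert)"
  by (simp add: bounded_op_on_def clinear_on_def)
lemma bop_zero: "bop T \<Longrightarrow> T 0 = (0::'a::chilbert)"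
  using bop_scaleC[of T 0 0] by simp
lemma bop_minus: "bop T \<Longrightarrow> T (- x) = - T (x::'a::chilbert)"
  using bop_scaleC[of T "-1" x] by (simp add: scaleC_minus1)
lemma bop_diff: "bop T \<Longrightarrow> T (x - y) = T x - T (y::'a::chilbert)"
  using bop_add[of T x "-y"] bop_minus[of T y] by simp
lemma bop_scaleR: "bop T \<Longrightarrow> T (r *\<^sub>R x) = r *\<^sub>R T (x::'a::chilbert)"
  by (simp add: scaleR_as_scaleC bop_scaleC)
lemma bop_sum: assumes T: "bop T" shows "T (sum f A) = (\<Sum>i\<in>A. T (f i::'a::chilbert))"
  by (induction A rule: infinite_finite_induct) (auto simp: bop_add[OF T] bop_zero[OF T])

lemma bop_bounded_linear: "bop T \<Longrightarrow> bounded_linear (T::'a::chilbert \<Rightarrow> 'a)"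
proof -
  assume T: "bop T"
  then obtain K where K: "\<forall>x. norm (T x) \<le> K * norm x" by (auto simp: bounded_op_on_def)
  show ?thesis
  proof (rule bounded_linear_intro[where K=K])
    show "T (x + y) = T x + T y" for x y using T by (rule bop_add)
    show "T (r *\<^sub>R x) = r *\<^sub>R T x" for r x using T by (rule bop_scaleR)
    show "norm (T x) \<le> norm x * K" for x using K by (simp add: mult.commute)
  qed
qed

lemma bop_bound: "bop T \<Longrightarrow> \<exists>K\<ge>0. \<forall>x. norm (T x) \<le> K * norm (x::'a::chilbert)"
proof -
  assume T: "bop T"
  then obtain K where K: "\<forall>x. norm (T x) \<le> K * norm x" by (auto simp: bounded_op_on_def)
  have "norm (T x) \<le> max K 0 * norm x" for x
    using K[rule_format, of x] mult_right_mono[of K "max K 0" "norm x"] by simp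
  thus ?thesis by (intro exI[of _ "max K 0"]) auto
qed

lemma bop_comp: "bop S \<Longrightarrow> bop T \<Longrightarrow> bop (\<lambda>x. S (T (x::'a::chilbert)))"
proof -
  assume S: "bop S" and T: "bop T"
  obtain K where K: "K \<ge> 0" "\<forall>x. norm (S x) \<le> K * norm x" using bop_bound[OF S] by blast
  obtain L where L: "L \<ge> 0" "\<forall>x. norm (T x) \<le> L * norm x" using bop_bound[OF T] by blast
  have "norm (S (T x)) \<le> (K * L) * norm x" for x
  proof -
    have "norm (S (T x)) \<le> K * norm (T x)" using K by blast
    also have "\<dots> \<le> K * (L * norm x)" using K L by (intro mult_left_mono) auto
    finally show ?thesis by (simp add: mult.assoc)
  qed
  thus ?thesis using S T by (auto simp: bounded_op_on_def clinear_on_def bop_add[OF S] bop_add[OF T] bop_scaleC[OF S] bop_scaleC[OF T])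
qed

lemma adj_props:
  assumes T: "bop (T::'a::chilbert \<Rightarrow> 'a)"
  shows "cinner (T x) y = cinner x (adj T y)"
  using adjoint_on_props(2)[OF closed_UNIV csubspace_UNIV T] by (simp add: adj_def)

lemma adj_props2:
  assumes T: "bop (T::'a::chilbert \<Rightarrow> 'a)"
  shows "cinner x (T y) = cinner (adj T x) y"
proof -
  have "cinner x (T y) = cnj (cinner (T y) x)" by (rule cinner_conj)
  also have "\<dots> = cnj (cinner y (adj T x))" by (simp add: adj_props[OF T])
  also have "\<dots> = cinner (adj T x) y" by (rule cinner_conj[symmetric])
  finally show ?thesis .
qed

lemma adj_bop:
  assumes T: "bop (T::'a::chilbert \<Rightarrow> 'a)"
  shows "bop (adj T)"
proof -
  obtain K where K: "K \<ge> 0" "\<forall>x. norm (T x) \<le> K * norm x" using bop_bound[OF T] by blast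
  have add: "adj T (x + y) = adj T x + adj T y" for x y
    by (rule cinner_ext_left) (simp add: adj_props[OF T, symmetric] cinner_add_right)
  have sc: "adj T (c *\<^sub>C x) = c *\<^sub>C adj T x" for c x
    by (rule cinner_ext_left) (simp add: adj_props[OF T, symmetric] cinner_scaleC_right)
  have bnd: "norm (adj T y) \<le> K * norm y" for y
  proof (cases "adj T y = 0")
    case True thus ?thesis using K by simp
  next
    case False
    have "(norm (adj T y))\<^sup>2 = Re (cinner (adj T y) (adj T y))" by (simp add: Re_cinner_self)
    also have "\<dots> = Re (cinner (T (adj T y)) y)" by (simp add: adj_props[OF T])
    also have "\<dots> \<le> cmod (cinner (T (adj T y)) y)" by (rule complex_Re_le_cmod)
    also have "\<dots> \<le> norm (T (adj T y)) * norm y" by (rule cauchy_schwarz)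
    also have "\<dots> \<le> K * norm (adj T y) * norm y" using K by (intro mult_right_mono) auto
    finally have "norm (adj T y) * norm (adj T y) \<le> norm (adj T y) * (K * norm y)"
      by (simp add: power2_eq_square algebra_simps)
    thus ?thesis using False by simp
  qed
  show ?thesis using add sc bnd by (auto simp: bounded_op_on_def clinear_on_def)
qed

lemma adj_adj:
  assumes T: "bop (T::'a::chilbert \<Rightarrow> 'a)"
  shows "adj (adj T) = T"
proof
  fix y
  show "adj (adj T) y = T y"
    unfolding adj_def
    by (rule adjoint_on_eqI) (auto simp: adj_props2[OF T, symmetric] adj_def[symmetric])
qed


definition sqc :: "nat \<Rightarrow> real" where
  "sqc n = (-1) ^ n * ((1/2::real) gchoose n)"

fun sqt :: "nat \<Rightarrow> real" where
  "sqt 0 = 1"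
| "sqt (Suc n) = sqt n * (2 * real n + 1) / (2 * real n + 2)"

lemma sqt_pos: "0 < sqt n"
  by (induction n) auto

lemma sqc_0 [simp]: "sqc 0 = 1"
  by (simp add: sqc_def)

lemma gchoose_Suc_rec: "(a::real) gchoose (Suc k) = (a gchoose k) * (a - real k) / (real k + 1)"
proof -
  have "a * (a gchoose k) = real k * (a gchoose k) + real (Suc k) * (a gchoose (Suc k))"
    by (rule gbinomial_mult_1)
  thus ?thesis by (simp add: field_simps)
qed

lemma sqc_Suc_rec: "sqc (Suc n) = sqc n * (real n - 1/2) / (real n + 1)"
  by (simp add: sqc_def gchoose_Suc_rec field_simps)

lemma sqc_Suc: "sqc (Suc n) = - sqt n / (2 * real n + 2)"
proof (induction n)
  case 0 thus ?case by (simp add: sqc_Suc_rec)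
next
  case (Suc n)
  have "sqc (Suc (Suc n)) = sqc (Suc n) * (real (Suc n) - 1/2) / (real (Suc n) + 1)"
    by (rule sqc_Suc_rec)
  also have "\<dots> = - sqt (Suc n) / (2 * real (Suc n) + 2)"
    unfolding Suc by (simp add: field_simps)
  finally show ?case .
qed

lemma sqc_Suc_nonpos: "sqc (Suc n) \<le> 0"
  using sqt_pos[of n] by (simp add: sqc_Suc divide_nonpos_pos)

lemma sqc_partial: "(\<Sum>k<Suc n. sqc k) = sqt n"
proof (induction n)
  case 0 thus ?case by simp
next
  case (Suc n)
  have "(\<Sum>k<Suc (Suc n). sqc k) = sqt n + sqc (Suc n)" using Suc by simp
  also have "\<dots> = sqt (Suc n)" by (simp add: sqc_Suc field_simps)
  finally show ?case .
qed

lemma sqc_partial_nonneg: "0 \<le> (\<Sum>k<n. sqc k)"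
  by (cases n) (auto simp: sqc_partial sqt_pos less_imp_le simp del: sum.lessThan_Suc)

lemma summable_abs_sqc: "summable (\<lambda>n. \<bar>sqc n\<bar>)"
proof -
  have "summable (\<lambda>n. - sqc (Suc n))"
  proof (rule summableI_nonneg_bounded[where x=1])
    show "0 \<le> - sqc (Suc n)" for n using sqc_Suc_nonpos[of n] by simp
    show "(\<Sum>k<n. - sqc (Suc k)) \<le> 1" for n
    proof -
      have h1: "(\<Sum>k<Suc n. sqc k) = sqc 0 + (\<Sum>k<n. sqc (Suc k))" by (rule sum.lessThan_Suc_shift)
      have h2: "(\<Sum>k<Suc n. sqc k) = sqt n" by (rule sqc_partial)
      have h3: "(\<Sum>k<n. - sqc (Suc k)) = - (\<Sum>k<n. sqc (Suc k))" by (simp add: sum_negf)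
      have "(\<Sum>k<n. - sqc (Suc k)) = 1 - sqt n" using h1 h2 h3 by simp
      thus ?thesis using sqt_pos[of n] by simp
    qed
  qed
  moreover have "(\<lambda>n. \<bar>sqc (Suc n)\<bar>) = (\<lambda>n. - sqc (Suc n))"
    using sqc_Suc_nonpos by (simp add: abs_of_nonpos)
  ultimately have "summable (\<lambda>n. \<bar>sqc (Suc n)\<bar>)" by simp
  thus ?thesis using summable_Suc_iff[of "\<lambda>n. \<bar>sqc n\<bar>"] by simp
qed

lemma summable_sqc: "summable sqc"
  using summable_abs_sqc summable_rabs_cancel by blast

lemma suminf_sqc_nonneg: "0 \<le> suminf sqc"
proof -
  have "(\<lambda>n. \<Sum>k<n. sqc k) \<longlonglongrightarrow> suminf sqc" using summable_sqc by (rule summable_LIMSEQ)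
  thus ?thesis using sqc_partial_nonneg by (intro LIMSEQ_le_const) auto
qed

lemma sqc_cauchy:
  "(\<Sum>i\<le>k. sqc i * sqc (k - i)) = (if k = 0 then 1 else if k = 1 then -1 else 0)"
proof -
  have "(\<Sum>i\<le>k. sqc i * sqc (k - i)) = (\<Sum>i\<le>k. (-1)^k * (((1/2::real) gchoose i) * ((1/2) gchoose (k - i))))"
    by (intro sum.cong refl) (simp add: sqc_def power_add[symmetric])
  also have "\<dots> = (-1)^k * (\<Sum>i=0..k. ((1/2::real) gchoose i) * ((1/2) gchoose (k - i)))"
    by (simp add: sum_distrib_left atLeast0AtMost)
  also have "\<dots> = (-1)^k * ((1::real) gchoose k)"
    using gbinomial_Vandermonde[of "1/2::real" "1/2" k] by simp
  also have "(1::real) gchoose k = real (1 choose k)"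
  proof -
    have "real (1 choose k) = (of_nat 1 gchoose k)" by (rule binomial_gbinomial)
    thus ?thesis by simp
  qed
  finally show ?thesis
    by (cases k) (auto simp: binomial_eq_0)
qed


lemma Cauchy_product_sums_bilinear:
  fixes a :: "nat \<Rightarrow> 'a::banach" and b :: "nat \<Rightarrow> 'b::banach"
    and prod :: "'a \<Rightarrow> 'b \<Rightarrow> 'c::banach"
  assumes bb: "bounded_bilinear prod"
    and a: "summable (\<lambda>k. norm (a k))"
    and b: "summable (\<lambda>k. norm (b k))"
  shows "(\<lambda>k. \<Sum>i\<le>k. prod (a i) (b (k - i))) sums (prod (\<Sum>k. a k) (\<Sum>k. b k))"
proof -
  interpret bounded_bilinear prod by (rule bb)
  obtain K where K: "K > 0" "\<And>x y. norm (prod x y) \<le> norm x * norm y * K" using pos_bounded by blast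
  let ?S1 = "\<lambda>n::nat. {..<n} \<times> {..<n}"
  let ?S2 = "\<lambda>n::nat. {(i,j). i + j < n}"
  have S1_mono: "\<And>m n. m \<le> n \<Longrightarrow> ?S1 m \<subseteq> ?S1 n" by auto
  have S2_le_S1: "\<And>n. ?S2 n \<subseteq> ?S1 n" by auto
  have S1_le_S2: "\<And>n. ?S1 (n div 2) \<subseteq> ?S2 n" by auto
  have finite_S1: "\<And>n. finite (?S1 n)" by simp
  with S2_le_S1 have finite_S2: "\<And>n. finite (?S2 n)" by (rule finite_subset)

  let ?g = "\<lambda>(i,j). prod (a i) (b j)"
  let ?f = "\<lambda>(i,j). norm (a i) * norm (b j)"
  have f_nonneg: "\<And>x. 0 \<le> ?f x" by auto
  then have norm_sum_f: "\<And>A. norm (sum ?f A) = sum ?f A"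
    unfolding real_norm_def
    by (simp only: abs_of_nonneg sum_nonneg [rule_format])
  have sumprod: "prod (\<Sum>k<n. a k) (\<Sum>k<n. b k) = sum ?g (?S1 n)" for n
  proof -
    have "prod (\<Sum>k<n. a k) (\<Sum>k<n. b k) = (\<Sum>i<n. prod (a i) (\<Sum>k<n. b k))" by (rule sum_left)
    also have "\<dots> = (\<Sum>i<n. \<Sum>j<n. prod (a i) (b j))" by (simp only: sum_right)
    also have "\<dots> = sum ?g (?S1 n)" by (rule sum.cartesian_product)
    finally show ?thesis .
  qed
  have "(\<lambda>n. prod (\<Sum>k<n. a k) (\<Sum>k<n. b k)) \<longlonglongrightarrow> prod (\<Sum>k. a k) (\<Sum>k. b k)"
    by (intro tendsto summable_LIMSEQ summable_norm_cancel [OF a] summable_norm_cancel [OF b])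
  then have 1: "(\<lambda>n. sum ?g (?S1 n)) \<longlonglongrightarrow> prod (\<Sum>k. a k) (\<Sum>k. b k)"
    by (simp only: sumprod)

  have "(\<lambda>n. (\<Sum>k<n. norm (a k)) * (\<Sum>k<n. norm (b k))) \<longlonglongrightarrow> (\<Sum>k. norm (a k)) * (\<Sum>k. norm (b k))"
    using a b by (intro tendsto_mult summable_LIMSEQ)
  then have "(\<lambda>n. sum ?f (?S1 n)) \<longlonglongrightarrow> (\<Sum>k. norm (a k)) * (\<Sum>k. norm (b k))"
    by (simp only: sum_product sum.Sigma [rule_format] finite_lessThan)
  then have "convergent (\<lambda>n. sum ?f (?S1 n))"
    by (rule convergentI)
  then have Cauchy: "Cauchy (\<lambda>n. sum ?f (?S1 n))"
    by (rule convergent_Cauchy)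
  have "Zfun (\<lambda>n. sum ?f (?S1 n - ?S2 n)) sequentially"
  proof (rule ZfunI, simp only: eventually_sequentially norm_sum_f)
    fix r :: real
    assume r: "0 < r"
    from CauchyD [OF Cauchy r] obtain N
      where "\<forall>m\<ge>N. \<forall>n\<ge>N. norm (sum ?f (?S1 m) - sum ?f (?S1 n)) < r" ..
    then have "\<And>m n. N \<le> n \<Longrightarrow> n \<le> m \<Longrightarrow> norm (sum ?f (?S1 m - ?S1 n)) < r"
      by (simp only: sum_diff finite_S1 S1_mono)
    then have N: "\<And>m n. N \<le> n \<Longrightarrow> n \<le> m \<Longrightarrow> sum ?f (?S1 m - ?S1 n) < r"
      by (simp only: norm_sum_f)
    show "\<exists>N. \<forall>n\<ge>N. sum ?f (?S1 n - ?S2 n) < r"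
    proof (intro exI allI impI)
      fix n
      assume "2 * N \<le> n"
      then have n: "N \<le> n div 2" by simp
      have "sum ?f (?S1 n - ?S2 n) \<le> sum ?f (?S1 n - ?S1 (n div 2))"
        by (intro sum_mono2 finite_Diff finite_S1 f_nonneg Diff_mono subset_refl S1_le_S2)
      also have "\<dots> < r"
        using n div_le_dividend by (rule N)
      finally show "sum ?f (?S1 n - ?S2 n) < r" .
    qed
  qed
  then have "Zfun (\<lambda>n. K * sum ?f (?S1 n - ?S2 n)) sequentially"
    by (rule bounded_linear.Zfun[OF bounded_linear_mult_right])
  then have "Zfun (\<lambda>n. sum ?g (?S1 n - ?S2 n)) sequentially"
  proof (rule Zfun_le [rule_format])
    fix n
    have "norm (sum ?g (?S1 n - ?S2 n)) \<le> (\<Sum>x\<in>?S1 n - ?S2 n. norm (?g x))" by (rule norm_sum)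
    also have "\<dots> \<le> (\<Sum>x\<in>?S1 n - ?S2 n. K * ?f x)"
      using K(2) by (intro sum_mono) (auto simp: mult.commute mult.left_commute)
    also have "\<dots> = K * sum ?f (?S1 n - ?S2 n)" by (simp add: sum_distrib_left)
    also have "\<dots> = norm (K * sum ?f (?S1 n - ?S2 n))"
    proof -
      have "0 \<le> K * sum ?f (?S1 n - ?S2 n)" using K(1) f_nonneg by (intro mult_nonneg_nonneg sum_nonneg) auto
      thus ?thesis by (simp only: real_norm_def abs_of_nonneg)
    qed
    finally show "norm (sum ?g (?S1 n - ?S2 n)) \<le> norm (K * sum ?f (?S1 n - ?S2 n))" .
  qed
  then have 2: "(\<lambda>n. sum ?g (?S1 n) - sum ?g (?S2 n)) \<longlonglongrightarrow> 0"
    unfolding tendsto_Zfun_iff diff_0_right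
    by (simp only: sum_diff finite_S1 S2_le_S1)
  with 1 have "(\<lambda>n. sum ?g (?S2 n)) \<longlonglongrightarrow> prod (\<Sum>k. a k) (\<Sum>k. b k)"
    by (rule Lim_transform2)
  then show ?thesis
    by (simp only: sums_def sum.triangle_reindex)
qed


lemma adj_norm_le:
  assumes T: "bop (T::'a::chilbert \<Rightarrow> 'a)" and K: "K \<ge> 0" "\<And>x. norm (T x) \<le> K * norm x"
  shows "norm (adj T y) \<le> K * norm y"
proof (cases "adj T y = 0")
  case True thus ?thesis using K by simp
next
  case False
  have "(norm (adj T y))\<^sup>2 = Re (cinner (adj T y) (adj T y))" by (simp add: Re_cinner_self)
  also have "\<dots> = Re (cinner (T (adj T y)) y)" by (simp add: adj_props[OF T])
  also have "\<dots> \<le> cmod (cinner (T (adj T y)) y)" by (rule complex_Re_le_cmod)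
  also have "\<dots> \<le> norm (T (adj T y)) * norm y" by (rule cauchy_schwarz)
  also have "\<dots> \<le> K * norm (adj T y) * norm y" using K by (intro mult_right_mono) auto
  finally have "norm (adj T y) * norm (adj T y) \<le> norm (adj T y) * (K * norm y)"
    by (simp add: power2_eq_square algebra_simps)
  thus ?thesis using False by simp
qed

lemma bop_id: "bop (\<lambda>x::'a::chilbert. x)"
  by (auto simp: bounded_op_on_def clinear_on_def intro: exI[of _ 1])

lemma bop_funpow: "bop T \<Longrightarrow> bop (T ^^ n :: 'a::chilbert \<Rightarrow> 'a)"
proof (induction n)
  case 0 thus ?case using bop_id by (simp add: id_def)
next
  case (Suc n)
  have "bop (\<lambda>x. T ((T ^^ n) x))" using Suc bop_comp by blast
  thus ?case by (simp add: comp_def)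
qed

locale contr =
  fixes T :: "'a::chilbert \<Rightarrow> 'a"
  assumes bopT: "bop T" and contrT: "\<And>x. norm (T x) \<le> norm x"
begin

definition B :: "'a \<Rightarrow> 'a" where "B x = adj T (T x)"

definition sq :: "'a \<Rightarrow> 'a" where "sq x = (\<Sum>n. sqc n *\<^sub>R (B ^^ n) x)"

lemma bop_adjT: "bop (adj T)" by (rule adj_bop[OF bopT])

lemma contr_adjT: "norm (adj T y) \<le> norm y"
  using adj_norm_le[OF bopT, of 1] contrT by simp

lemma bopB: "bop B"
  using bop_comp[OF bop_adjT bopT] by (simp add: B_def[abs_def])

lemma contrB: "norm (B x) \<le> norm x"
  unfolding B_def using contr_adjT contrT order_trans by blast

lemma B_selfadj: "cinner (B x) y = cinner x (B y)"
  unfolding B_def by (simp add: adj_props[OF bopT, symmetric] adj_props2[OF bopT, symmetric])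

lemma bopBn: "bop (B ^^ n)" using bop_funpow[OF bopB] .

lemma contrBn: "norm ((B ^^ n) x) \<le> norm x"
  by (induction n) (auto intro: order_trans[OF contrB])

lemma Bn_selfadj: "cinner ((B ^^ n) x) y = cinner x ((B ^^ n) y)"
  by (induction n arbitrary: x y) (auto simp: B_selfadj funpow_swap1)

lemma summable_sq_norm: "summable (\<lambda>n. norm (sqc n *\<^sub>R (B ^^ n) x))"
proof (rule summable_comparison_test)
  show "\<exists>N. \<forall>n\<ge>N. norm (norm (sqc n *\<^sub>R (B ^^ n) x)) \<le> \<bar>sqc n\<bar> * norm x"
    using contrBn by (auto intro!: mult_left_mono)
  show "summable (\<lambda>n. \<bar>sqc n\<bar> * norm x)" by (rule summable_mult2[OF summable_abs_sqc])
qed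

lemma summable_sq: "summable (\<lambda>n. sqc n *\<^sub>R (B ^^ n) x)"
  using summable_sq_norm by (rule summable_norm_cancel)

lemma sq_commute:
  assumes Q: "bop Q" and QB: "\<And>x. Q (B x) = B (Q x)"
  shows "Q (sq x) = sq (Q x)"
proof -
  have QBn: "Q ((B ^^ n) x) = (B ^^ n) (Q x)" for n x
    by (induction n arbitrary: x) (auto simp: QB)
  have "Q (sq x) = (\<Sum>n. Q (sqc n *\<^sub>R (B ^^ n) x))"
    unfolding sq_def by (rule bounded_linear.suminf[OF bop_bounded_linear[OF Q] summable_sq])
  also have "\<dots> = sq (Q x)" by (simp add: sq_def bop_scaleR[OF Q] QBn)
  finally show ?thesis .
qed

lemma sq_add: "sq (x + y) = sq x + sq y"
proof -
  have "sq (x + y) = (\<Sum>n. sqc n *\<^sub>R (B ^^ n) x + sqc n *\<^sub>R (B ^^ n) y)"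
    by (simp add: sq_def bop_add[OF bopBn] scaleR_add_right)
  also have "\<dots> = sq x + sq y" unfolding sq_def by (rule suminf_add[OF summable_sq summable_sq, symmetric])
  finally show ?thesis .
qed

lemma sq_scaleC: "sq (c *\<^sub>C x) = c *\<^sub>C sq x"
proof -
  have "c *\<^sub>C sq x = (\<Sum>n. c *\<^sub>C (sqc n *\<^sub>R (B ^^ n) x))"
    unfolding sq_def by (rule bounded_linear.suminf[OF bounded_linear_scaleC summable_sq])
  also have "\<dots> = sq (c *\<^sub>C x)" by (simp add: sq_def bop_scaleC[OF bopBn] scaleC_scaleR_comm)
  finally show ?thesis by simp
qed

lemma sq_bound: "norm (sq x) \<le> (\<Sum>n. \<bar>sqc n\<bar>) * norm x"
proof -
  have "norm (sq x) \<le> (\<Sum>n. norm (sqc n *\<^sub>R (B ^^ n) x))"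
    unfolding sq_def by (rule summable_norm[OF summable_sq_norm])
  also have "\<dots> \<le> (\<Sum>n. \<bar>sqc n\<bar> * norm x)"
    using contrBn by (intro suminf_le summable_sq_norm summable_mult2[OF summable_abs_sqc])
      (auto intro!: mult_left_mono)
  also have "\<dots> = (\<Sum>n. \<bar>sqc n\<bar>) * norm x" by (rule suminf_mult2[symmetric, OF summable_abs_sqc])
  finally show ?thesis .
qed

lemma bop_sq: "bop sq"
  using sq_add sq_scaleC sq_bound by (auto simp: bounded_op_on_def clinear_on_def)

lemma cinner_sq_left: "cinner (sq x) y = (\<Sum>n. sqc n *\<^sub>R cinner ((B ^^ n) x) y)"
  unfolding sq_def
  by (subst bounded_linear.suminf[OF bounded_linear_cinner_left summable_sq]) (simp add: cinner_scaleR_left)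

lemma cinner_sq_right: "cinner x (sq y) = (\<Sum>n. sqc n *\<^sub>R cinner x ((B ^^ n) y))"
  unfolding sq_def
  by (subst bounded_linear.suminf[OF bounded_linear_cinner_right summable_sq]) (simp add: cinner_scaleR_right)

lemma sq_selfadj: "cinner (sq x) y = cinner x (sq y)"
  by (simp add: cinner_sq_left cinner_sq_right Bn_selfadj)

lemma sq_Re_nonneg: "0 \<le> Re (cinner (sq x) x)"
proof -
  have sm: "summable (\<lambda>n. sqc n *\<^sub>R cinner ((B ^^ n) x) x)"
  proof -
    have "summable (\<lambda>n. cinner (sqc n *\<^sub>R (B ^^ n) x) x)"
      by (rule bounded_linear.summable[OF bounded_linear_cinner_left summable_sq])
    thus ?thesis by (simp add: cinner_scaleR_left)
  qed
  have "Re (cinner (sq x) x) = (\<Sum>n. Re (sqc n *\<^sub>R cinner ((B ^^ n) x) x))"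
    unfolding cinner_sq_left by (rule Re_suminf[OF sm])
  also have "\<dots> \<ge> (\<Sum>n. sqc n * (norm x)\<^sup>2)"
  proof (rule suminf_le)
    show "summable (\<lambda>n. sqc n * (norm x)\<^sup>2)" by (rule summable_mult2[OF summable_sqc])
    show "summable (\<lambda>n. Re (sqc n *\<^sub>R cinner ((B ^^ n) x) x))"
      by (rule bounded_linear.summable[OF bounded_linear_Re sm])
    show "sqc n * (norm x)\<^sup>2 \<le> Re (sqc n *\<^sub>R cinner ((B ^^ n) x) x)" for n
    proof (cases n)
      case 0 thus ?thesis by (simp add: Re_cinner_self)
    next
      case (Suc m)
      have "Re (cinner ((B ^^ n) x) x) \<le> cmod (cinner ((B ^^ n) x) x)" by (rule complex_Re_le_cmod)
      also have "\<dots> \<le> norm ((B ^^ n) x) * norm x" by (rule cauchy_schwarz)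
      also have "\<dots> \<le> norm x * norm x" using contrBn by (intro mult_right_mono) auto
      finally have le: "Re (cinner ((B ^^ n) x) x) \<le> (norm x)\<^sup>2" by (simp add: power2_eq_square)
      have "sqc n \<le> 0" using Suc sqc_Suc_nonpos by simp
      hence "sqc n * (norm x)\<^sup>2 \<le> sqc n * Re (cinner ((B ^^ n) x) x)"
        using mult_left_mono_neg[OF le] by simp
      thus ?thesis by simp
    qed
  qed
  also have "(\<Sum>n. sqc n * (norm x)\<^sup>2) = suminf sqc * (norm x)\<^sup>2"
    by (rule suminf_mult2[symmetric, OF summable_sqc])
  finally show ?thesis using suminf_sqc_nonneg by (meson mult_nonneg_nonneg zero_le_power2 order_trans)
qed

lemma sq_Im: "Im (cinner (sq x) x) = 0"
proof -
  have "cinner (sq x) x = cnj (cinner (sq x) x)"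
    by (metis sq_selfadj cinner_conj)
  hence "Im (cinner (sq x) x) = Im (cnj (cinner (sq x) x))" by (rule arg_cong)
  thus ?thesis by simp
qed

lemma positive_sq: "positive_op sq"
  using bop_sq sq_Re_nonneg sq_Im by (simp add: positive_op_def)

end


lemma pos_selfadj:
  assumes A: "positive_op (A::'a::chilbert \<Rightarrow> 'a)"
  shows "cinner (A x) y = cinner x (A y)"
proof -
  have bA: "bop A" and q: "\<And>v. Im (cinner (A v) v) = 0" using A by (auto simp: positive_op_def)
  define a where "a = cinner (A x) y"
  define b where "b = cinner (A y) x"
  have e1: "cinner (A (x + y)) (x + y) = cinner (A x) x + cinner (A y) y + a + b"
    by (simp add: bop_add[OF bA] cinner_simps a_def b_def)
  have e2: "cinner (A (x + \<i> *\<^sub>C y)) (x + \<i> *\<^sub>C y) = cinner (A x) x + cinner (A y) y - \<i> * a + \<i> * b"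
    by (simp add: bop_add[OF bA] bop_scaleC[OF bA] cinner_simps a_def b_def algebra_simps)
  have i1: "Im (a + b) = 0" using e1 q[of "x + y"] q[of x] q[of y] by simp
  have i2: "Re (b - a) = 0" using e2 q[of "x + \<i> *\<^sub>C y"] q[of x] q[of y] by simp
  have "b = cnj a" using i1 i2 by (simp add: complex_eq_iff)
  hence "cinner x (A y) = a" using cinner_conj[of x "A y"] b_def by simp
  thus ?thesis by (simp add: a_def)
qed

lemma pos_zero:
  assumes A: "positive_op (A::'a::chilbert \<Rightarrow> 'a)" and z: "cinner (A y) y = 0"
  shows "A y = 0"
proof -
  have bA: "bop A" and q: "\<And>v. 0 \<le> Re (cinner (A v) v)" using A by (auto simp: positive_op_def)
  define w where "w = A y"
  have "Re (cinner (A y) w) = 0"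
  proof (rule quad_zero)
    show "0 \<le> Re (cinner (A w) w)" by (rule q)
    fix t :: real
    have "cinner (A (y + t *\<^sub>R w)) (y + t *\<^sub>R w)
       = cinner (A y) y + t *\<^sub>R cinner (A y) w + t *\<^sub>R cinner (A w) y + t *\<^sub>R t *\<^sub>R cinner (A w) w"
      by (simp add: bop_add[OF bA] bop_scaleR[OF bA] cinner_simps cinner_scaleR_left cinner_scaleR_right scaleR_add_right)
    also have "cinner (A w) y = cnj (cinner (A y) w)"
      by (simp add: pos_selfadj[OF A] cinner_conj[of w "A y"])
    finally have "Re (cinner (A (y + t *\<^sub>R w)) (y + t *\<^sub>R w)) = 2 * t * Re (cinner (A y) w) + t\<^sup>2 * Re (cinner (A w) w)"
      using z by (simp add: power2_eq_square)
    thus "0 \<le> 2 * t * Re (cinner (A y) w) + t\<^sup>2 * Re (cinner (A w) w)" using q by metis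
  qed
  hence "Re (cinner w w) = 0" by (simp add: w_def)
  thus ?thesis by (simp add: Re_cinner_self w_def)
qed

context contr
begin

definition Bl :: "nat \<Rightarrow> 'a \<Rightarrow>\<^sub>L 'a" where "Bl n = Blinfun (B ^^ n)"

lemma Bl_apply: "blinfun_apply (Bl n) = B ^^ n"
  unfolding Bl_def by (rule bounded_linear_Blinfun_apply[OF bop_bounded_linear[OF bopBn]])

lemma norm_Bl: "norm (Bl n) \<le> 1"
  by (rule norm_blinfun_bound) (auto simp: Bl_apply contrBn)

lemma sq_sq: "sq (sq x) = x - B x"
proof -
  define a where "a i = sqc i *\<^sub>R Bl i" for i
  define b where "b j = sqc j *\<^sub>R (B ^^ j) x" for j
  have sa: "summable (\<lambda>k. norm (a k))"
  proof (rule summable_comparison_test)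
    show "\<exists>N. \<forall>n\<ge>N. norm (norm (a n)) \<le> \<bar>sqc n\<bar>"
      using norm_Bl by (auto simp: a_def intro!: mult_left_le)
    show "summable (\<lambda>n. \<bar>sqc n\<bar>)" by (rule summable_abs_sqc)
  qed
  have sb: "summable (\<lambda>k. norm (b k))" unfolding b_def by (rule summable_sq_norm)
  have cp: "(\<lambda>k. \<Sum>i\<le>k. blinfun_apply (a i) (b (k - i))) sums (blinfun_apply (\<Sum>k. a k) (\<Sum>k. b k))"
    by (rule Cauchy_product_sums_bilinear[OF bounded_bilinear_blinfun_apply sa sb])
  have rhs: "blinfun_apply (\<Sum>k. a k) (\<Sum>k. b k) = sq (sq x)"
  proof -
    have "(\<Sum>k. b k) = sq x" by (simp add: b_def sq_def)
    moreover have "blinfun_apply (\<Sum>k. a k) v = (\<Sum>k. blinfun_apply (a k) v)" for v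
      by (rule bounded_linear.suminf[OF blinfun.bounded_linear_left summable_norm_cancel[OF sa]])
    ultimately show ?thesis by (simp add: a_def sq_def blinfun.scaleR_left Bl_apply)
  qed
  have lhs: "(\<Sum>i\<le>k. blinfun_apply (a i) (b (k - i)))
      = (if k = 0 then x else if k = 1 then - B x else 0)" for k
  proof -
    have "(\<Sum>i\<le>k. blinfun_apply (a i) (b (k - i))) = (\<Sum>i\<le>k. (sqc i * sqc (k - i)) *\<^sub>R (B ^^ k) x)"
    proof (intro sum.cong refl)
      fix i assume "i \<in> {..k}"
      have "(B ^^ i) ((B ^^ (k - i)) x) = (B ^^ (i + (k - i))) x" by (simp add: funpow_add)
      hence "(B ^^ i) ((B ^^ (k - i)) x) = (B ^^ k) x" using \<open>i \<in> {..k}\<close> by simp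
      thus "blinfun_apply (a i) (b (k - i)) = (sqc i * sqc (k - i)) *\<^sub>R (B ^^ k) x"
        by (simp add: a_def b_def blinfun.scaleR_left Bl_apply bop_scaleR[OF bopBn])
    qed
    also have "\<dots> = (\<Sum>i\<le>k. sqc i * sqc (k - i)) *\<^sub>R (B ^^ k) x" by (simp add: scaleR_sum_left)
    also have "\<dots> = (if k = 0 then x else if k = 1 then - B x else 0)"
      by (simp add: sqc_cauchy)
    finally show ?thesis .
  qed
  have "(\<lambda>k. if k = 0 then x else if k = 1 then - B x else 0) sums (\<Sum>k\<in>{0::nat,1}. if k = 0 then x else if k = 1 then - B x else 0)"
    by (intro sums_finite) auto
  hence "(\<lambda>k. \<Sum>i\<le>k. blinfun_apply (a i) (b (k - i))) sums (x - B x)" by (simp add: lhs)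
  with cp have "blinfun_apply (\<Sum>k. a k) (\<Sum>k. b k) = x - B x" by (rule sums_unique2)
  thus ?thesis using rhs by simp
qed

lemma sq_unique:
  assumes Q: "positive_op Q" and QQ: "Q \<circ> Q = (\<lambda>x. x - B x)"
  shows "Q = sq"
proof
  fix x
  have bQ: "bop Q" using Q by (simp add: positive_op_def)
  have QQx: "Q (Q v) = v - B v" for v using QQ by (metis comp_apply)
  have QB: "Q (B v) = B (Q v)" for v
  proof -
    have "B v = v - Q (Q v)" using QQx[of v] by simp
    hence "Q (B v) = Q v - Q (Q (Q v))" by (simp add: bop_diff[OF bQ])
    also have "\<dots> = B (Q v)" using QQx[of "Q v"] by simp
    finally show ?thesis .
  qed
  have comm: "Q (sq v) = sq (Q v)" for v by (rule sq_commute[OF bQ QB])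
  define y where "y = sq x - Q x"
  have sqy: "sq y = (x - B x) - sq (Q x)" by (simp add: y_def bop_diff[OF bop_sq] sq_sq)
  have Qy: "Q y = sq (Q x) - (x - B x)" by (simp add: y_def bop_diff[OF bQ] comm QQx)
  have sum0: "sq y + Q y = 0" by (simp add: sqy Qy)
  have "cinner (sq y) y + cinner (Q y) y = 0"
    using sum0 by (simp add: cinner_add_left[symmetric])
  moreover have "0 \<le> Re (cinner (sq y) y)" "0 \<le> Re (cinner (Q y) y)"
    "Im (cinner (sq y) y) = 0" "Im (cinner (Q y) y) = 0"
    using positive_sq Q by (auto simp: positive_op_def)
  ultimately have "cinner (sq y) y = 0" "cinner (Q y) y = 0"
    by (simp_all add: complex_eq_iff)
  hence z1: "sq y = 0" and z2: "Q y = 0"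
    using pos_zero[OF positive_sq] pos_zero[OF Q] by auto
  have "cinner y y = cinner x (sq y) - cinner x (Q y)"
    by (simp add: y_def cinner_diff_left sq_selfadj pos_selfadj[OF Q])
  hence "y = 0" using z1 z2 by simp
  thus "Q x = sq x" by (simp add: y_def)
qed

lemma defect_eq: "defect T = sq"
proof -
  have "B = (\<lambda>x. adj T (T x))" by (simp add: B_def[abs_def])
  hence A: "(\<lambda>x. x - adj T (T x)) = (\<lambda>x. x - B x)" by simp
  have sqsq: "sq \<circ> sq = (\<lambda>x. x - B x)" by (auto simp: sq_sq)
  show ?thesis
    unfolding defect_def op_sqrt_def A
  proof (rule the_equality)
    show "positive_op sq \<and> sq \<circ> sq = (\<lambda>x. x - B x)" using positive_sq sqsq by simp
    fix R assume "positive_op R \<and> R \<circ> R = (\<lambda>x. x - B x)"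
    thus "R = sq" using sq_unique by blast
  qed
qed

lemma defect_sq: "defect T (defect T x) = x - adj T (T x)"
  by (simp add: defect_eq sq_sq B_def)

lemma defect_selfadj: "cinner (defect T x) y = cinner x (defect T y)"
  by (simp add: defect_eq sq_selfadj)

lemma bop_defect: "bop (defect T)"
  by (simp add: defect_eq bop_sq)

end

lemma contr_adj: "contr T \<Longrightarrow> contr (adj T)"
  using contr.bop_adjT contr.contr_adjT by (unfold_locales) auto

lemma defect_intertwine:
  assumes "contr T"
  shows "T (defect T x) = defect (adj T) (T x)"
proof -
  interpret c1: contr T by (rule assms)
  interpret c2: contr "adj T" by (rule contr_adj[OF assms])
  have aa: "adj (adj T) = T" by (rule adj_adj[OF c1.bopT])
  have TB: "T (c1.B v) = c2.B (T v)" for v by (simp add: c1.B_def c2.B_def aa)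
  have TBn: "T ((c1.B ^^ n) v) = (c2.B ^^ n) (T v)" for n v
    by (induction n arbitrary: v) (auto simp: TB)
  have "T (c1.sq x) = (\<Sum>n. T (sqc n *\<^sub>R (c1.B ^^ n) x))"
    unfolding c1.sq_def by (rule bounded_linear.suminf[OF bop_bounded_linear[OF c1.bopT] c1.summable_sq])
  also have "\<dots> = c2.sq (T x)" by (simp add: c2.sq_def bop_scaleR[OF c1.bopT] TBn)
  finally show ?thesis by (simp add: c1.defect_eq c2.defect_eq)
qed


lemma closure_seqE:
  fixes x :: "'a::first_countable_topology"
  assumes "x \<in> closure A"
  obtains f where "\<And>n. f n \<in> A" "f \<longlonglongrightarrow> x"
proof -
  have "\<exists>f. (\<forall>n. f n \<in> A) \<and> f \<longlonglongrightarrow> x" using assms by (simp only: closure_sequential)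
  thus ?thesis using that by blast
qed

lemma closure_seqI:
  fixes x :: "'a::first_countable_topology"
  assumes "\<And>n. f n \<in> A" "f \<longlonglongrightarrow> x"
  shows "x \<in> closure A"
proof -
  have "\<exists>f. (\<forall>n. f n \<in> A) \<and> f \<longlonglongrightarrow> x" using assms by blast
  thus ?thesis by (simp only: closure_sequential)
qed

lemma closure_csubspace:
  assumes A: "csubspace (A::'a::chilbert set)"
  shows "csubspace (closure A)"
proof -
  have "0 \<in> closure A" using csubspace_0[OF A] closure_subset by blast
  moreover have "x + y \<in> closure A" if xy: "x \<in> closure A" "y \<in> closure A" for x y
  proof -
    obtain f where f: "\<And>n. f n \<in> A" "f \<longlonglongrightarrow> x" using closure_seqE[OF xy(1)] by blast
    obtain g where g: "\<And>n. g n \<in> A" "g \<longlonglongrightarrow> y" using closure_seqE[OF xy(2)] by blast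
    have "(\<lambda>n. f n + g n) \<longlonglongrightarrow> x + y" using f g by (intro tendsto_add) auto
    moreover have "\<And>n. f n + g n \<in> A" using f g csubspace_add[OF A] by blast
    ultimately show ?thesis by (intro closure_seqI)
  qed
  moreover have "c *\<^sub>C x \<in> closure A" if xx: "x \<in> closure A" for c x
  proof -
    obtain f where f: "\<And>n. f n \<in> A" "f \<longlonglongrightarrow> x" using closure_seqE[OF xx] by blast
    have "(\<lambda>n. c *\<^sub>C f n) \<longlonglongrightarrow> c *\<^sub>C x"
      using f by (intro bounded_linear.tendsto[OF bounded_linear_scaleC]) auto
    moreover have "\<And>n. c *\<^sub>C f n \<in> A" using f csubspace_scaleC[OF A] by blast
    ultimately show ?thesis by (intro closure_seqI)
  qed
  ultimately show ?thesis unfolding csubspace_def by blast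
qed

lemma csubspace_range:
  assumes T: "bop (T::'a::chilbert \<Rightarrow> 'a)"
  shows "csubspace (range T)"
proof -
  have "0 \<in> range T" using bop_zero[OF T] by (metis rangeI)
  moreover have "T a + T b \<in> range T" for a b using bop_add[OF T, of a b] by (metis rangeI)
  moreover have "c *\<^sub>C T a \<in> range T" for c a using bop_scaleC[OF T, of c a] by (metis rangeI)
  ultimately show ?thesis unfolding csubspace_def by auto
qed

lemma csubspace_closure_range:
  "bop (T::'a::chilbert \<Rightarrow> 'a) \<Longrightarrow> csubspace (closure (range T))"
  by (intro closure_csubspace csubspace_range)

lemma orth_closure:
  assumes h: "\<And>a. a \<in> A \<Longrightarrow> cinner a v = 0" and a: "a \<in> closure A"
  shows "cinner a (v::'a::chilbert) = 0"
proof -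
  have cont: "continuous_on UNIV (\<lambda>a. cinner a v)"
    by (rule linear_continuous_on[OF bounded_linear_cinner_left])
  have cl: "closed {a. cinner a v = 0}"
    using continuous_closed_preimage_constant[OF cont closed_UNIV, of 0] by simp
  have "A \<subseteq> {a. cinner a v = 0}" using h by blast
  hence "closure A \<subseteq> {a. cinner a v = 0}" using cl by (rule closure_minimal)
  thus ?thesis using a by blast
qed

lemma perp_zero:
  assumes v: "v \<in> closure (range (T::'a::chilbert \<Rightarrow> 'a))" and h: "\<And>x. cinner (T x) v = 0"
  shows "v = 0"
proof -
  have "cinner v v = 0" using orth_closure[of "range T" v v] h v by blast
  thus ?thesis by simp
qed

lemma kerzero:
  assumes v: "v \<in> closure (range (T::'a::chilbert \<Rightarrow> 'a))"
    and sa: "\<And>x y. cinner (T x) y = cinner x (T y)" and z: "T v = 0"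
  shows "v = 0"
  using v by (rule perp_zero) (simp add: sa z)

lemma image_closure_range:
  assumes Q: "bop (Q::'a::chilbert \<Rightarrow> 'a)" and h: "\<And>x. Q (T x) \<in> closure (range T')"
  shows "Q ` closure (range T) \<subseteq> closure (range T')"
proof (rule image_closure_subset)
  show "continuous_on (closure (range T)) Q"
    by (rule linear_continuous_on[OF bop_bounded_linear[OF Q]])
  show "closed (closure (range T'))" by simp
  show "Q ` range T \<subseteq> closure (range T')" using h by auto
qed

lemma inv_op_eqI:
  assumes inj: "\<And>a b. f a = f b \<Longrightarrow> a = b" and v: "f v = w"
  shows "inv_op f w = v"
  unfolding inv_op_def using inj v by (intro the_equality) auto

locale resolv = contr T for T :: "'a::chilbert \<Rightarrow> 'a" +
  fixes z :: complex
  assumes z: "cmod z < 1"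
begin

definition R :: "'a \<Rightarrow> 'a" where "R = inv_op (\<lambda>y. y - z *\<^sub>C T y)"

lemma injR: "a - z *\<^sub>C T a = b - z *\<^sub>C T b \<Longrightarrow> a = b"
proof -
  assume h: "a - z *\<^sub>C T a = b - z *\<^sub>C T b"
  have "a - b = z *\<^sub>C T (a - b)"
    using h by (simp add: bop_diff[OF bopT] scaleC_diff_right algebra_simps)
  hence "norm (a - b) = cmod z * norm (T (a - b))" by (metis norm_scaleC)
  also have "\<dots> \<le> cmod z * norm (a - b)" using contrT by (intro mult_left_mono) auto
  finally have "(1 - cmod z) * norm (a - b) \<le> 0" by (simp add: algebra_simps)
  hence "norm (a - b) \<le> 0" using z by (simp add: mult_le_0_iff)
  thus "a = b" by simp
qed

lemma summable_neumann: "summable (\<lambda>n. z ^ n *\<^sub>C (T ^^ n) w)"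
proof -
  have c: "norm ((T ^^ n) w) \<le> norm w" for n
    by (induction n) (auto intro: order_trans[OF contrT])
  have "summable (\<lambda>n. norm (z ^ n *\<^sub>C (T ^^ n) w))"
  proof (rule summable_comparison_test)
    show "\<exists>N. \<forall>n\<ge>N. norm (norm (z ^ n *\<^sub>C (T ^^ n) w)) \<le> norm w * cmod z ^ n"
    proof (intro exI allI impI)
      fix n :: nat
      have "cmod z ^ n * norm ((T ^^ n) w) \<le> cmod z ^ n * norm w" using c by (intro mult_left_mono) auto
      thus "norm (norm (z ^ n *\<^sub>C (T ^^ n) w)) \<le> norm w * cmod z ^ n"
        by (simp add: norm_scaleC norm_power mult.commute)
    qed
    show "summable (\<lambda>n. norm w * cmod z ^ n)"
      using z by (intro summable_mult summable_geometric) auto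
  qed
  thus ?thesis by (rule summable_norm_cancel)
qed

lemma R_eq: "R w - z *\<^sub>C T (R w) = w"
proof -
  define v where "v = (\<Sum>n. z ^ n *\<^sub>C (T ^^ n) w)"
  have "z *\<^sub>C T v = (\<Sum>n. z *\<^sub>C T (z ^ n *\<^sub>C (T ^^ n) w))"
    unfolding v_def
    by (rule bounded_linear.suminf[OF bounded_linear_compose[OF bounded_linear_scaleC bop_bounded_linear[OF bopT]] summable_neumann])
  also have "\<dots> = (\<Sum>n. z ^ Suc n *\<^sub>C (T ^^ Suc n) w)"
    by (simp add: bop_scaleC[OF bopT] scaleC_scaleC mult.commute)
  also have "\<dots> = v - w"
    unfolding v_def using suminf_split_head[OF summable_neumann[of w]] by simp
  finally have eq: "v - z *\<^sub>C T v = w" by simp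
  have "R w = v" unfolding R_def using injR eq by (rule inv_op_eqI)
  thus ?thesis using eq by simp
qed

lemma R_unique: "v - z *\<^sub>C T v = w \<Longrightarrow> R w = v"
  using injR R_eq by metis

lemma R_expand: "R w = w + z *\<^sub>C T (R w)"
  using R_eq[of w] by (simp add: algebra_simps)

lemma R_commute:
  assumes Q: "bop Q" and QT: "\<And>x. Q (T x) = T (Q x)"
  shows "Q (R w) = R (Q w)"
proof -
  have "Q (R w) - z *\<^sub>C T (Q (R w)) = Q w"
    using R_eq[of w] by (metis QT Q bop_diff bop_scaleC)
  thus ?thesis by (rule R_unique[symmetric])
qed

lemma R_add: "R (a + b) = R a + R b"
proof (rule R_unique)
  have "(R a + R b) - z *\<^sub>C T (R a + R b) = (R a - z *\<^sub>C T (R a)) + (R b - z *\<^sub>C T (R b))"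
    by (simp add: bop_add[OF bopT] scaleC_add_right algebra_simps)
  also have "\<dots> = a + b" by (simp add: R_eq)
  finally show "(R a + R b) - z *\<^sub>C T (R a + R b) = a + b" .
qed

lemma R_scaleC: "R (c *\<^sub>C a) = c *\<^sub>C R a"
proof (rule R_unique)
  have "c *\<^sub>C R a - z *\<^sub>C T (c *\<^sub>C R a) = c *\<^sub>C (R a - z *\<^sub>C T (R a))"
    by (simp add: bop_scaleC[OF bopT] scaleC_diff_right scaleC_scaleC mult.commute)
  also have "\<dots> = c *\<^sub>C a" by (simp add: R_eq)
  finally show "c *\<^sub>C R a - z *\<^sub>C T (c *\<^sub>C R a) = c *\<^sub>C a" .
qed

end


locale fund =
  fixes S P F :: "'a::chilbert \<Rightarrow> 'a"
  assumes bopS: "bop S" and bopP: "bop P" and comm: "\<And>x. S (P x) = P (S x)"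
    and contrP: "\<And>x. norm (P x) \<le> norm x"
    and fundF: "fundamental_operator S P F"
begin

abbreviation "D \<equiv> defect P"
abbreviation "M \<equiv> defect_space P"
abbreviation "Fa \<equiv> adjoint_on (defect_space P) F"
abbreviation "Sa \<equiv> adj S"
abbreviation "Pa \<equiv> adj P"

lemma cP: "contr P" by (unfold_locales) (auto simp: bopP contrP)

lemma bopD: "bop D" using contr.bop_defect[OF cP] .
lemma D_sa: "cinner (D x) y = cinner x (D y)" using contr.defect_selfadj[OF cP] .
lemma D_sq: "D (D x) = x - Pa (P x)" using contr.defect_sq[OF cP] .
lemma bopSa: "bop Sa" by (rule adj_bop[OF bopS])
lemma bopPa: "bop Pa" by (rule adj_bop[OF bopP])

lemma M_eq: "M = closure (range D)" by (simp add: defect_space_def)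
lemma closedM: "closed M" by (simp add: M_eq)
lemma subM: "csubspace M" unfolding M_eq by (rule csubspace_closure_range[OF bopD])
lemma DM: "D x \<in> M" unfolding M_eq by (rule subsetD[OF closure_subset rangeI])

lemma bopF: "bounded_op_on M F" using fundF by (simp add: fundamental_operator_def)
lemma FM: "x \<in> M \<Longrightarrow> F x \<in> M" using fundF by (auto simp: fundamental_operator_def)
lemma DFD: "D (F (D h)) = S h - Sa (P h)" using fundF unfolding fundamental_operator_def by (metis)

lemma FaM: "Fa y \<in> M" by (rule adjoint_on_props(1)[OF closedM subM bopF])
lemma Fa_prop: "x \<in> M \<Longrightarrow> cinner (F x) y = cinner x (Fa y)"
  by (rule adjoint_on_props(2)[OF closedM subM bopF])

lemma adjS1: "cinner (S x) y = cinner x (Sa y)" by (rule adj_props[OF bopS])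
lemma adjS2: "cinner x (S y) = cinner (Sa x) y" by (rule adj_props2[OF bopS])
lemma adjP1: "cinner (P x) y = cinner x (Pa y)" by (rule adj_props[OF bopP])
lemma adjP2: "cinner x (P y) = cinner (Pa x) y" by (rule adj_props2[OF bopP])
lemma adjSa2: "cinner x (Sa y) = cinner (S x) y" by (simp add: adjS1)
lemma adjPa2: "cinner x (Pa y) = cinner (P x) y" by (simp add: adjP1)

lemma DFaD: "D (Fa (D k)) = Sa k - Pa (S k)"
proof (rule cinner_ext_right)
  fix h
  have e1: "cinner (D (Fa (D k))) h = cnj (cinner (D h) (Fa (D k)))"
    using D_sa[of "Fa (D k)" h] cinner_conj[of "Fa (D k)" "D h"] by simp
  have e2: "cinner (D h) (Fa (D k)) = cinner (D (F (D h))) k"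
    using Fa_prop[OF DM, of h "D k"] D_sa[of "F (D h)" k] by simp
  have e3: "cnj (cinner (S h - Sa (P h)) k) = cinner k (S h - Sa (P h))"
    by (rule cinner_conj[symmetric])
  have e4: "cinner k (S h - Sa (P h)) = cinner (Sa k - Pa (S k)) h"
    by (simp only: cinner_diff_right cinner_diff_left adjS2 adjSa2 adjP2)
  show "cinner (D (Fa (D k))) h = cinner (Sa k - Pa (S k)) h"
    using e1 e2 e3 e4 by (simp add: DFD)
qed

lemma one: "D (S h) = F (D h) + Fa (D (P h))"
proof -
  define w where "w = D (S h) - F (D h) - Fa (D (P h))"
  have wM: "w \<in> M" unfolding w_def using subM DM FM FaM by (intro csubspace_diff) auto
  have "D w = D (D (S h)) - D (F (D h)) - D (Fa (D (P h)))"
    by (simp add: w_def bop_diff[OF bopD])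
  also have "\<dots> = 0"
    by (simp add: D_sq DFD DFaD comm bop_diff[OF bopPa])
  finally have "D w = 0" .
  hence "w = 0" using wM unfolding M_eq by (rule_tac kerzero[where T=D]) (auto simp: D_sa)
  thus ?thesis unfolding w_def by (simp add: algebra_simps)
qed

lemma star1:
  assumes x: "x \<in> M"
  shows "Sa (D x) = D (Fa x) + Pa (D (F x))"
proof (rule cinner_ext_right)
  fix h
  have "cinner (Sa (D x)) h = cinner (D x) (S h)" by (rule adjS2[symmetric])
  also have "\<dots> = cinner x (D (S h))" by (rule D_sa)
  also have "\<dots> = cinner x (F (D h)) + cinner x (Fa (D (P h)))" by (simp add: one cinner_add_right)
  also have "cinner x (F (D h)) = cinner (D (Fa x)) h"
  proof -
    have "cinner x (F (D h)) = cnj (cinner (F (D h)) x)" by (rule cinner_conj)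
    also have "cinner (F (D h)) x = cinner (D h) (Fa x)" by (rule Fa_prop[OF DM])
    also have "cnj \<dots> = cinner (Fa x) (D h)" by (rule cinner_conj[symmetric])
    also have "\<dots> = cinner (D (Fa x)) h" by (rule D_sa[symmetric])
    finally show ?thesis .
  qed
  also have "cinner x (Fa (D (P h))) = cinner (F x) (D (P h))" by (rule Fa_prop[OF x, symmetric])
  also have "\<dots> = cinner (D (F x)) (P h)" by (rule D_sa[symmetric])
  also have "\<dots> = cinner (Pa (D (F x))) h" by (rule adjP2)
  finally show "cinner (Sa (D x)) h = cinner (D (Fa x) + Pa (D (F x))) h"
    by (simp add: cinner_add_left)
qed

end


locale mainloc = fund S P F + f2: fund "adj S" "adj P" G for S P F G :: "'a::chilbert \<Rightarrow> 'a"
begin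

abbreviation "D' \<equiv> defect (adj P)"
abbreviation "M' \<equiv> defect_space (adj P)"
abbreviation "Ga \<equiv> adjoint_on (defect_space (adj P)) G"

lemma SaSa: "adj Sa = S" by (rule adj_adj[OF bopS])
lemma PaPa: "adj Pa = P" by (rule adj_adj[OF bopP])

lemma D'_sq: "D' (D' x) = x - P (Pa x)" using f2.D_sq by (simp add: PaPa)
lemma DFD': "D' (G (D' h)) = Sa h - S (Pa h)" using f2.DFD by (simp add: SaSa)
lemma one': "D' (Sa h) = G (D' h) + Ga (D' (Pa h))" by (rule f2.one)
lemma D'_sa: "cinner (D' x) y = cinner x (D' y)" by (rule f2.D_sa)
lemma commA: "Sa (Pa x) = Pa (Sa x)" by (rule f2.comm)
lemma PD: "P (D x) = D' (P x)" by (rule defect_intertwine[OF cP])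
lemma PaD': "Pa (D' x) = D (Pa x)" using defect_intertwine[OF f2.cP, of x] by (simp add: PaPa)

lemma M'_eq: "M' = closure (range D')" by (simp add: defect_space_def)
lemma D'M: "D' x \<in> M'" by (rule f2.DM)
lemma PM: "x \<in> M \<Longrightarrow> P x \<in> M'"
proof -
  assume x: "x \<in> M"
  have "P ` closure (range D) \<subseteq> closure (range D')"
    by (rule image_closure_range[OF bopP]) (simp add: PD subsetD[OF closure_subset rangeI])
  thus ?thesis using x by (auto simp: M_eq M'_eq)
qed

lemma GM: "x \<in> M' \<Longrightarrow> G x \<in> M'" by (rule f2.FM)
lemma GaM: "Ga y \<in> M'" by (rule f2.FaM)
lemma Ga_prop: "x \<in> M' \<Longrightarrow> cinner (G x) y = cinner x (Ga y)" by (rule f2.Fa_prop)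
lemma subM': "csubspace M'" by (rule f2.subM)

lemma D_sa2: "cinner x (D y) = cinner (D x) y" by (simp add: D_sa)
lemma D'_sa2: "cinner x (D' y) = cinner (D' x) y" by (simp add: D'_sa)

lemmas mv = cinner_diff_left cinner_diff_right cinner_add_left cinner_add_right
  adjS2 adjSa2 adjP2 adjPa2 bop_diff[OF bopP] bop_diff[OF bopS] bop_diff[OF bopSa] bop_diff[OF bopPa]
  comm commA

lemma a_eq:
  assumes x: "x \<in> M"
  shows "P (F x) = Ga (P x)"
proof -
  define w where "w = P (F x) - Ga (P x)"
  have wM: "w \<in> M'" unfolding w_def using subM' PM[OF FM[OF x]] GaM by (rule csubspace_diff)
  have "cinner w (D' y) = 0" for y
  proof -
    define Z where "Z = Fa (D (Pa y)) - Pa (G (D' y))"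
    have e1: "cinner (P (F x)) (D' y) = cinner x (Fa (D (Pa y)))"
      by (simp add: adjP1 PaD' Fa_prop[OF x])
    have e2: "cinner (Ga (P x)) (D' y) = cinner x (Pa (G (D' y)))"
    proof -
      have "cinner (Ga (P x)) (D' y) = cnj (cinner (D' y) (Ga (P x)))" by (rule cinner_conj)
      also have "cinner (D' y) (Ga (P x)) = cinner (G (D' y)) (P x)" by (rule Ga_prop[OF D'M, symmetric])
      also have "cnj \<dots> = cinner (P x) (G (D' y))" by (rule cinner_conj[symmetric])
      also have "\<dots> = cinner x (Pa (G (D' y)))" by (rule adjP1)
      finally show ?thesis .
    qed
    have "cinner w (D' y) = cinner x Z" by (simp add: w_def Z_def cinner_diff_left cinner_diff_right e1 e2)
    also have "\<dots> = 0"
    proof (rule orth_closure[of "range D"])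
      show "x \<in> closure (range D)" using x by (simp add: M_eq)
      fix a assume "a \<in> range D"
      then obtain k where a: "a = D k" by blast
      have u1: "cinner (D k) (Fa (D (Pa y))) = cinner (S k - Sa (P k)) (Pa y)"
        by (simp add: Fa_prop[OF DM, symmetric] D_sa2 DFD)
      have u2: "cinner (D k) (Pa (G (D' y))) = cinner (P k) (Sa y - S (Pa y))"
        by (simp add: adjPa2 PD D'_sa DFD')
      have "cinner (D k) Z = cinner (S k - Sa (P k)) (Pa y) - cinner (P k) (Sa y - S (Pa y))"
        by (simp add: Z_def cinner_diff_right u1 u2)
      also have "\<dots> = 0" by (simp add: mv)
      finally show "cinner a Z = 0" by (simp add: a)
    qed
    finally have "cinner w (D' y) = 0" .
    thus ?thesis .
  qed
  hence "cinner (D' y) w = 0" for y by (metis cinner_conj complex_cnj_zero)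
  hence "w = 0" using wM unfolding M'_eq by (rule_tac perp_zero) auto
  thus ?thesis by (simp add: w_def)
qed

lemma b_eq:
  assumes x: "x \<in> M"
  shows "D' (D (F x)) - P (Fa x) = Ga (D' (D x)) - G (P x)"
proof -
  define w where "w = (D' (D (F x)) - P (Fa x)) - (Ga (D' (D x)) - G (P x))"
  have wM: "w \<in> M'" unfolding w_def using subM' D'M PM[OF FaM] GaM GM[OF PM[OF x]]
    by (intro csubspace_diff) auto
  have "cinner w (D' y) = 0" for y
  proof -
    define Z where "Z = (Fa (D (D' (D' y))) - F (D (Pa y))) - (D (D' (G (D' y))) - Pa (Ga (D' y)))"
    have t1: "cinner (D' (D (F x))) (D' y) = cinner x (Fa (D (D' (D' y))))"
      by (simp add: D'_sa D_sa Fa_prop[OF x])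
    have t2: "cinner (P (Fa x)) (D' y) = cinner x (F (D (Pa y)))"
    proof -
      have "cinner (P (Fa x)) (D' y) = cinner (Fa x) (D (Pa y))" by (simp add: adjP1 PaD')
      also have "\<dots> = cnj (cinner (D (Pa y)) (Fa x))" by (rule cinner_conj)
      also have "cinner (D (Pa y)) (Fa x) = cinner (F (D (Pa y))) x" by (rule Fa_prop[OF DM, symmetric])
      also have "cnj \<dots> = cinner x (F (D (Pa y)))" by (rule cinner_conj[symmetric])
      finally show ?thesis .
    qed
    have t3: "cinner (Ga (D' (D x))) (D' y) = cinner x (D (D' (G (D' y))))"
    proof -
      have "cinner (Ga (D' (D x))) (D' y) = cnj (cinner (D' y) (Ga (D' (D x))))" by (rule cinner_conj)
      also have "cinner (D' y) (Ga (D' (D x))) = cinner (G (D' y)) (D' (D x))" by (rule Ga_prop[OF D'M, symmetric])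
      also have "cnj \<dots> = cinner (D' (D x)) (G (D' y))" by (rule cinner_conj[symmetric])
      also have "\<dots> = cinner x (D (D' (G (D' y))))" by (simp add: D'_sa D_sa)
      finally show ?thesis .
    qed
    have t4: "cinner (G (P x)) (D' y) = cinner x (Pa (Ga (D' y)))"
      by (simp add: Ga_prop[OF PM[OF x]] adjP1)
    have "cinner w (D' y) = cinner x Z"
      by (simp add: w_def Z_def cinner_diff_left cinner_diff_right t1 t2 t3 t4)
    also have "\<dots> = 0"
    proof (rule orth_closure[of "range D"])
      show "x \<in> closure (range D)" using x by (simp add: M_eq)
      fix a assume "a \<in> range D"
      then obtain k where a: "a = D k" by blast
      have u1: "cinner (D k) (Fa (D (D' (D' y)))) = cinner (S k - Sa (P k)) (y - P (Pa y))"
        by (simp add: Fa_prop[OF DM, symmetric] D_sa2 DFD D'_sq)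
      have u2: "cinner (D k) (F (D (Pa y))) = cinner k (S (Pa y) - Sa (P (Pa y)))"
      proof -
        have "cinner (D k) (F (D (Pa y))) = cnj (cinner (F (D (Pa y))) (D k))" by (rule cinner_conj)
        also have "cinner (F (D (Pa y))) (D k) = cinner (D (F (D (Pa y)))) k" by (rule D_sa[symmetric])
        also have "\<dots> = cinner (S (Pa y) - Sa (P (Pa y))) k" by (simp add: DFD)
        also have "cnj \<dots> = cinner k (S (Pa y) - Sa (P (Pa y)))" by (rule cinner_conj[symmetric])
        finally show ?thesis .
      qed
      have u3: "cinner (D k) (D (D' (G (D' y)))) = cinner (k - Pa (P k)) (Sa y - S (Pa y))"
        by (simp add: D_sa2 D_sq DFD')
      have u4: "cinner (D k) (Pa (Ga (D' y))) = cinner (Sa (P k) - S (Pa (P k))) y"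
      proof -
        have "cinner (D k) (Pa (Ga (D' y))) = cinner (D' (P k)) (Ga (D' y))" by (simp add: adjPa2 PD)
        also have "\<dots> = cinner (G (D' (P k))) (D' y)" by (rule Ga_prop[OF D'M, symmetric])
        also have "\<dots> = cinner (Sa (P k) - S (Pa (P k))) y" by (simp add: D'_sa2 DFD')
        finally show ?thesis .
      qed
      have "cinner (D k) Z = (cinner (S k - Sa (P k)) (y - P (Pa y)) - cinner k (S (Pa y) - Sa (P (Pa y))))
          - (cinner (k - Pa (P k)) (Sa y - S (Pa y)) - cinner (Sa (P k) - S (Pa (P k))) y)"
        by (simp add: Z_def cinner_diff_right u1 u2 u3 u4)
      also have "\<dots> = 0" by (simp add: mv)
      finally show "cinner a Z = 0" by (simp add: a)
    qed
    finally show ?thesis .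
  qed
  hence "cinner (D' y) w = 0" for y by (metis cinner_conj complex_cnj_zero)
  hence "w = 0" using wM unfolding M'_eq by (rule_tac perp_zero) auto
  thus ?thesis by (simp add: w_def)
qed

lemma G_add: "a \<in> M' \<Longrightarrow> b \<in> M' \<Longrightarrow> G (a + b) = G a + G b"
  using f2.bopF by (simp add: bounded_op_on_def clinear_on_def)
lemma G_scaleC: "a \<in> M' \<Longrightarrow> G (c *\<^sub>C a) = c *\<^sub>C G a"
  using f2.bopF by (simp add: bounded_op_on_def clinear_on_def)
lemma G_minus: "a \<in> M' \<Longrightarrow> G (- a) = - G a"
  using G_scaleC[of a "-1"] by (simp add: scaleC_minus1)
lemma Ga_add: "Ga (a + b) = Ga a + Ga b"
  by (rule adjoint_on_add[OF f2.closedM subM' f2.bopF])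
lemma Ga_scaleC: "Ga (c *\<^sub>C a) = c *\<^sub>C Ga a"
  by (rule adjoint_on_scaleC[OF f2.closedM subM' f2.bopF])
lemma Ga_minus: "Ga (- a) = - Ga a"
  by (rule adjoint_on_minus[OF f2.closedM subM' f2.bopF])
lemma Ga_diff: "Ga (a - b) = Ga a - Ga b"
  by (rule adjoint_on_diff[OF f2.closedM subM' f2.bopF])

theorem main_eq:
  assumes z: "cmod z < 1" and x: "x \<in> M"
  shows "char_fun P z (F x + z *\<^sub>C Fa x) = Ga (char_fun P z x) + z *\<^sub>C G (char_fun P z x)"
proof -
  interpret r: resolv Pa z by (unfold_locales) (auto simp: z f2.bopP f2.contrP)
  have R_def': "inv_op (\<lambda>y. y - z *\<^sub>C Pa y) = r.R" by (simp add: r.R_def)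
  have cf: "char_fun P z u = - P u + z *\<^sub>C D' (r.R (D u))" for u
    by (simp add: char_fun_def R_def')
  define v where "v = r.R (D x)"
  have RPa: "Pa (r.R w) = r.R (Pa w)" for w by (rule r.R_commute[OF bopPa]) simp
  have RSa: "Sa (r.R w) = r.R (Sa w)" for w by (rule r.R_commute[OF bopSa commA])
  have RDF: "r.R (D (F x)) = D (F x) + z *\<^sub>C r.R (Pa (D (F x)))"
    using r.R_expand[of "D (F x)"] by (simp add: RPa)
  have Rin: "r.R (D (F x + z *\<^sub>C Fa x)) = D (F x) + z *\<^sub>C Sa v"
  proof -
    have "r.R (D (F x + z *\<^sub>C Fa x)) = r.R (D (F x)) + z *\<^sub>C r.R (D (Fa x))"
      by (simp add: bop_add[OF bopD] bop_scaleC[OF bopD] r.R_add r.R_scaleC)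
    also have "\<dots> = D (F x) + z *\<^sub>C (r.R (Pa (D (F x))) + r.R (D (Fa x)))"
      by (simp add: RDF scaleC_add_right add.assoc)
    also have "r.R (Pa (D (F x))) + r.R (D (Fa x)) = r.R (Sa (D x))"
      by (simp add: star1[OF x] r.R_add add.commute)
    also have "\<dots> = Sa v" by (simp add: v_def RSa)
    finally show ?thesis .
  qed
  have LHS: "char_fun P z (F x + z *\<^sub>C Fa x)
      = - P (F x) + z *\<^sub>C (D' (D (F x)) - P (Fa x)) + (z * z) *\<^sub>C D' (Sa v)"
    by (simp add: cf Rin bop_add[OF bopP] bop_scaleC[OF bopP] bop_add[OF f2.bopD] bop_scaleC[OF f2.bopD]
        scaleC_add_right scaleC_diff_right scaleC_scaleC algebra_simps)
  have Dv: "D' v = D' (D x) + z *\<^sub>C D' (Pa v)"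
  proof -
    have "v = D x + z *\<^sub>C Pa v" using r.R_expand[of "D x"] by (simp add: v_def)
    hence "D' v = D' (D x + z *\<^sub>C Pa v)" by (rule arg_cong[where f=D'])
    thus ?thesis by (simp only: bop_add[OF f2.bopD] bop_scaleC[OF f2.bopD])
  qed
  have PxM: "P x \<in> M'" by (rule PM[OF x])
  have Theta: "char_fun P z x = - P x + z *\<^sub>C D' v" by (simp add: cf v_def)
  have GT: "G (char_fun P z x) = - G (P x) + z *\<^sub>C G (D' v)"
  proof -
    have m1: "- P x \<in> M'" using subM' PxM by (rule csubspace_minus)
    have m2: "z *\<^sub>C D' v \<in> M'" using subM' D'M by (rule csubspace_scaleC)
    have "G (- P x + z *\<^sub>C D' v) = G (- P x) + G (z *\<^sub>C D' v)" by (rule G_add[OF m1 m2])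
    also have "\<dots> = - G (P x) + z *\<^sub>C G (D' v)" by (simp only: G_minus[OF PxM] G_scaleC[OF D'M])
    finally show ?thesis unfolding Theta .
  qed
  have GaT: "Ga (char_fun P z x) = - Ga (P x) + z *\<^sub>C (Ga (D' (D x)) + z *\<^sub>C Ga (D' (Pa v)))"
    unfolding Theta by (simp add: Ga_add Ga_minus Ga_diff Ga_scaleC Dv)
  have RHS: "Ga (char_fun P z x) + z *\<^sub>C G (char_fun P z x)
      = - Ga (P x) + z *\<^sub>C (Ga (D' (D x)) - G (P x)) + (z * z) *\<^sub>C (G (D' v) + Ga (D' (Pa v)))"
    by (simp add: GT GaT scaleC_add_right scaleC_diff_right scaleC_minus_right scaleC_scaleC algebra_simps)
  show ?thesis
    unfolding LHS RHS by (simp add: a_eq[OF x] b_eq[OF x] one' v_def)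
qed

end


lemma gamma_contr:
  assumes g: "gamma_contraction S (P::'a::chilbert \<Rightarrow> 'a)"
  shows "norm (P x) \<le> norm x"
proof -
  have bP: "bop P" using g by (simp add: gamma_contraction_def)
  define c :: "nat \<Rightarrow> nat \<Rightarrow> complex" where "c i j = (if i = 0 \<and> j = 1 then 1 else 0)" for i j
  have op: "poly2_op c 1 S P = P"
    by (rule ext) (simp add: poly2_op_def c_def atMost_Suc)
  have pl: "poly2 c 1 s p = p" for s p
    by (simp add: poly2_def c_def atMost_Suc)
  have le: "onorm (poly2_op c 1 S P) \<le> (SUP w\<in>gamma_set. cmod (poly2 c 1 (fst w) (snd w)))"
    using g by (simp add: gamma_contraction_def)
  have ne: "gamma_set \<noteq> {}" unfolding gamma_set_def by (auto intro!: exI[of _ 0])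
  have "(SUP w\<in>gamma_set. cmod (poly2 c 1 (fst w) (snd w))) \<le> 1"
  proof (rule cSUP_least[OF ne])
    fix w assume "w \<in> gamma_set"
    then obtain z1 z2 where w: "w = (z1 + z2, z1 * z2)" "cmod z1 \<le> 1" "cmod z2 \<le> 1"
      by (auto simp: gamma_set_def)
    show "cmod (poly2 c 1 (fst w) (snd w)) \<le> 1"
      unfolding w(1) fst_conv snd_conv pl using w(2,3) by (simp add: norm_mult mult_le_one)
  qed
  hence on: "onorm P \<le> 1" using le op by simp
  have "norm (P x) \<le> onorm P * norm x" by (rule onorm[OF bop_bounded_linear[OF bP]])
  also have "\<dots> \<le> 1 * norm x" using on by (intro mult_right_mono) auto
  finally show ?thesis by simp
qed

theorem theorem1:
  fixes S P F G :: "'a::chilbert \<Rightarrow> 'a"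
  assumes "gamma_contraction S P"
    and "fundamental_operator S P F"
    and "fundamental_operator (adj S) (adj P) G"
  shows "\<forall>z. cmod z < 1 \<longrightarrow> (\<forall>x\<in>defect_space P.
           char_fun P z (F x + z *\<^sub>C adjoint_on (defect_space P) F x)
         = adjoint_on (defect_space (adj P)) G (char_fun P z x) + z *\<^sub>C G (char_fun P z x))"
proof -
  have bS: "bop S" and bP: "bop P" and cm: "S \<circ> P = P \<circ> S" using assms(1) by (auto simp: gamma_contraction_def)
  have comm: "S (P x) = P (S x)" for x using cm by (metis comp_apply)
  have cP: "norm (P x) \<le> norm x" for x by (rule gamma_contr[OF assms(1)])
  interpret f1: fund S P F by (unfold_locales) (auto simp: bS bP comm cP assms(2))
  have commA: "adj S (adj P x) = adj P (adj S x)" for x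
  proof (rule cinner_ext_left)
    fix y
    have "cinner y (adj S (adj P x)) = cinner (P (S y)) x"
      by (simp add: adj_props[OF bS, symmetric] adj_props[OF bP, symmetric])
    also have "\<dots> = cinner (S (P y)) x" by (simp add: comm)
    also have "\<dots> = cinner y (adj P (adj S x))"
      by (simp add: adj_props[OF bS] adj_props[OF bP])
    finally show "cinner y (adj S (adj P x)) = cinner y (adj P (adj S x))" .
  qed
  interpret f2: fund "adj S" "adj P" G
    by (unfold_locales) (auto simp: adj_bop[OF bS] adj_bop[OF bP] commA
        contr.contr_adjT[OF f1.cP] assms(3))
  interpret m: mainloc S P F G by unfold_locales
  show ?thesis using m.main_eq by blast
qed


end
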